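(* Let $0<\lambda<1$ and $0<\gamma\le\frac12$. For $n$ such that $\lambda n$ and $i=\gamma n$ are integers, let $M$ be a uniformly random $\lambda n\times n$ binary matrix, $C=\{x: Mx=0\}$, and let $N_i=N_i(C)$. Then \[ \Big|\frac1n\log_2\mathbb E N_i-\big(\psi(4,\gamma)+2h(\gamma)-3\lambda\big)\Big|=o(1)\quad(n\to\infty). \] Moreover, if $\psi(4,\gamma)>\lambda$, there is a constant $c>0$ independent of $n$ such that for all large $n$, \[ \frac1n\log_2\mathrm{Var}(N_i)\le 2\big(\psi(4,\gamma)+2h(\gamma)-3\lambda\big)-c. \]
   Context: $h(t)=t\log_2\frac1t+(1-t)\log_2\frac1{1-t}$ is the binary entropy function. $L_i=\{x\in\{0,1\}^n:|x|=i\}$. For a linear code $C$, $N_i(C)$ is the number of ordered 4-tuples $(u_1,u_2,u_3,u_4)\in(C\cap L_i)^4$ with $u_1+u_2+u_3+u_4=0$ whose entries are pairwise distinct. $\psi(4,\gamma)=\lim_{n\to\infty}\frac1n\log_2\big|\{(u_1,\dots,u_4)\in L_{\gamma n}^4: u_1+\dots+u_4=0\}\big|-2h(\gamma)$ (limit over $n$ with $\gamma n$ integer). *)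

theory Defs
  imports "HOL-Analysis.Analysis"
begin

definition h :: "real \<Rightarrow> real" where
  "h t = t * log 2 (1 / t) + (1 - t) * log 2 (1 / (1 - t))"

text \<open>Vectors of \<open>{0,1}^n\<close>: boolean functions on \<open>nat\<close> vanishing outside \<open>{0..<n}\<close>.\<close>
definition vecs :: "nat \<Rightarrow> (nat \<Rightarrow> bool) set" where
  "vecs n = {x. \<forall>j\<ge>n. \<not> x j}"

definition layer :: "nat \<Rightarrow> nat \<Rightarrow> (nat \<Rightarrow> bool) set" where
  "layer n i = {x \<in> vecs n. card {j. j < n \<and> x j} = i}"

text \<open>The four vectors sum to 0 over GF(2) (coordinatewise xor of all four is 0),
  i.e. \<open>u1 + u2 = u3 + u4\<close>.\<close>
definition sum4_zero :: "(nat \<Rightarrow> bool) \<Rightarrow> (nat \<Rightarrow> bool) \<Rightarrow> (nat \<Rightarrow> bool) \<Rightarrow> (nat \<Rightarrow> bool) \<Rightarrow> bool" where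
  "sum4_zero u1 u2 u3 u4 \<longleftrightarrow> (\<forall>j. (u1 j \<noteq> u2 j) = (u3 j \<noteq> u4 j))"

definition Tset :: "nat \<Rightarrow> nat \<Rightarrow> ((nat \<Rightarrow> bool) \<times> (nat \<Rightarrow> bool) \<times> (nat \<Rightarrow> bool) \<times> (nat \<Rightarrow> bool)) set" where
  "Tset n i = {(u1, u2, u3, u4). u1 \<in> layer n i \<and> u2 \<in> layer n i \<and> u3 \<in> layer n i \<and> u4 \<in> layer n i
                 \<and> sum4_zero u1 u2 u3 u4}"

definition Ncount :: "nat \<Rightarrow> nat \<Rightarrow> (nat \<Rightarrow> bool) set \<Rightarrow> nat" where
  "Ncount n i C = card {(u1, u2, u3, u4). u1 \<in> C \<inter> layer n i \<and> u2 \<in> C \<inter> layer n i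
        \<and> u3 \<in> C \<inter> layer n i \<and> u4 \<in> C \<inter> layer n i
        \<and> u1 \<noteq> u2 \<and> u1 \<noteq> u3 \<and> u1 \<noteq> u4 \<and> u2 \<noteq> u3 \<and> u2 \<noteq> u4 \<and> u3 \<noteq> u4
        \<and> sum4_zero u1 u2 u3 u4}"

text \<open>Filter: \<open>n \<rightarrow> \<infinity>\<close> along those n for which all the given reals times n are integers.\<close>
definition int_seq :: "real set \<Rightarrow> nat filter" where
  "int_seq S = inf sequentially (principal {n. \<forall>a\<in>S. a * real n \<in> \<int>})"

definition psi4 :: "real \<Rightarrow> real" where
  "psi4 \<gamma> = Lim (int_seq {\<gamma>})
     (\<lambda>n. log 2 (real (card (Tset n (nat \<lfloor>\<gamma> * real n\<rfloor>)))) / real n - 2 * h \<gamma>)"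

definition mats :: "nat \<Rightarrow> nat \<Rightarrow> (nat \<Rightarrow> nat \<Rightarrow> bool) set" where
  "mats m n = {M. \<forall>r c. (r \<ge> m \<or> c \<ge> n) \<longrightarrow> \<not> M r c}"

text \<open>Kernel \<open>{x : M x = 0}\<close> over GF(2).\<close>
definition kernel :: "nat \<Rightarrow> nat \<Rightarrow> (nat \<Rightarrow> nat \<Rightarrow> bool) \<Rightarrow> (nat \<Rightarrow> bool) set" where
  "kernel m n M = {x \<in> vecs n. \<forall>r<m. even (card {j. j < n \<and> M r j \<and> x j})}"

definition EN :: "nat \<Rightarrow> nat \<Rightarrow> nat \<Rightarrow> real" where
  "EN m n i = (\<Sum>M\<in>mats m n. real (Ncount n i (kernel m n M))) / real (card (mats m n))"

definition VarN :: "nat \<Rightarrow> nat \<Rightarrow> nat \<Rightarrow> real" where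
  "VarN m n i = (\<Sum>M\<in>mats m n. (real (Ncount n i (kernel m n M)) - EN m n i)\<^sup>2) / real (card (mats m n))"

end

theory Submission
  imports Defs "HOL-Real_Asymp.Real_Asymp"
begin


type_synonym vec = "nat \<Rightarrow> bool"

definition vx :: "vec \<Rightarrow> vec \<Rightarrow> vec" where "vx x y = (\<lambda>j. x j \<noteq> y j)"
definition ip :: "nat \<Rightarrow> vec \<Rightarrow> vec \<Rightarrow> bool" where
  "ip n y x = odd (card {j. j < n \<and> y j \<and> x j})"
definition xs :: "('a \<Rightarrow> vec) \<Rightarrow> 'a set \<Rightarrow> vec" where
  "xs v A = (\<lambda>j. odd (card {a\<in>A. v a j}))"
definition chi :: "nat \<Rightarrow> vec \<Rightarrow> vec \<Rightarrow> real" where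
  "chi n y x = (if ip n y x then -1 else 1)"
definition sd :: "'a set \<Rightarrow> 'a set \<Rightarrow> 'a set" where "sd A B = (A - B) \<union> (B - A)"

lemma odd_card_sd:
  assumes "finite P" "finite Q"
  shows "odd (card (sd P Q)) = (odd (card P) \<noteq> odd (card Q))"
proof -
  have "card (sd P Q) = card (P - Q) + card (Q - P)"
    unfolding sd_def by (rule card_Un_disjoint) (use assms in auto)
  moreover have "card P = card (P - Q) + card (P \<inter> Q)"
    using assms card_Int_Diff[of P Q] by simp
  moreover have "card Q = card (Q - P) + card (P \<inter> Q)"
    using assms card_Int_Diff[of Q P] by (simp add: Int_commute)
  ultimately show ?thesis by auto
qed

lemma ip_vx: "ip n y (vx x z) = (ip n y x \<noteq> ip n y z)"
proof -
  have "{j. j < n \<and> y j \<and> vx x z j} = sd {j. j < n \<and> y j \<and> x j} {j. j < n \<and> y j \<and> z j}"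
    by (auto simp: sd_def vx_def)
  then show ?thesis unfolding ip_def by (simp add: odd_card_sd)
qed

lemma xs_sd:
  assumes "finite A" "finite B"
  shows "xs v (sd A B) = vx (xs v A) (xs v B)"
proof
  fix j
  have "{a \<in> sd A B. v a j} = sd {a\<in>A. v a j} {a\<in>B. v a j}" by (auto simp: sd_def)
  then show "xs v (sd A B) j = vx (xs v A) (xs v B) j"
    unfolding xs_def vx_def using assms by (simp add: odd_card_sd)
qed

lemma xs_empty[simp]: "xs v {} = (\<lambda>_. False)"
  by (simp add: xs_def)

lemma xs_single[simp]: "xs v {a} = v a"
proof
  fix j
  have "{b\<in>{a}. v b j} = (if v a j then {a} else {})" by auto
  then show "xs v {a} j = v a j" by (simp add: xs_def)
qed

lemma xs_insert:
  assumes "finite A" "a \<notin> A"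
  shows "xs v (insert a A) = vx (v a) (xs v A)"
proof -
  have "insert a A = sd {a} A" using assms by (auto simp: sd_def)
  then show ?thesis using xs_sd[of "{a}" A v] assms by simp
qed

lemma xs_cong: assumes "\<And>a. a \<in> A \<Longrightarrow> v a = w a" shows "xs v A = xs w A"
proof
  fix j
  have "{a\<in>A. v a j} = {a\<in>A. w a j}" using assms by auto
  then show "xs v A j = xs w A j" by (simp add: xs_def)
qed

lemma chi_vx: "chi n y (vx x z) = chi n y x * chi n y z"
  by (simp add: chi_def ip_vx)

lemma prod_chi:
  assumes "finite A"
  shows "(\<Prod>a\<in>A. chi n y (v a)) = chi n y (xs v A)"
  using assms
proof (induction A rule: finite_induct)
  case empty then show ?case by (simp add: chi_def ip_def)
next
  case (insert a A)
  then show ?case by (simp add: xs_insert chi_vx)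
qed

lemma vecs_Pow: "bij_betw (\<lambda>x. {j. j < n \<and> x j}) (vecs n) (Pow {..<n})"
proof (rule bij_betw_byWitness[where f' = "\<lambda>S j. j \<in> S"])
  show "\<forall>a\<in>vecs n. (\<lambda>j. j \<in> {j. j < n \<and> a j}) = a"
  proof
    fix a assume "a \<in> vecs n"
    then show "(\<lambda>j. j \<in> {j. j < n \<and> a j}) = a" by (auto simp: vecs_def fun_eq_iff) (meson not_le)
  qed
qed (auto simp: vecs_def)

lemma finite_vecs[simp]: "finite (vecs n)"
  using bij_betw_finite[OF vecs_Pow] by simp

lemma card_vecs: "card (vecs n) = 2 ^ n"
  using bij_betw_same_card[OF vecs_Pow] by (simp add: card_Pow)

lemma flip_in_vecs: "y \<in> vecs n \<Longrightarrow> j < n \<Longrightarrow> y(j := \<not> y j) \<in> vecs n"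
  by (auto simp: vecs_def)

lemma sum_chi:
  "(\<Sum>y\<in>vecs n. chi n y x) = (if \<forall>j<n. \<not> x j then 2 ^ n else 0)"
proof (cases "\<forall>j<n. \<not> x j")
  case True
  then have e: "\<And>y. {j. j < n \<and> y j \<and> x j} = {}" by auto
  have "\<And>y. chi n y x = 1" unfolding chi_def ip_def e by simp
  then show ?thesis using True by (simp add: card_vecs)
next
  case False
  then obtain j where j: "j < n" "x j" by auto
  define f where "f y = y(j := \<not> y j)" for y :: vec
  have inv: "f (f y) = y" for y by (auto simp: f_def)
  have bij: "bij_betw f (vecs n) (vecs n)"
    by (rule bij_betw_byWitness[where f'=f]) (auto simp: inv f_def flip_in_vecs j)
  have neg: "chi n (f y) x = - chi n y x" for y
  proof -
    have "{i. i < n \<and> f y i \<and> x i} = sd {i. i < n \<and> y i \<and> x i} {j}"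
      using j by (auto simp: f_def sd_def)
    then have "ip n (f y) x = (\<not> ip n y x)"
      unfolding ip_def by (simp add: odd_card_sd)
    then show ?thesis by (simp add: chi_def)
  qed
  have "(\<Sum>y\<in>vecs n. chi n y x) = (\<Sum>y\<in>vecs n. chi n (f y) x)"
    using sum.reindex_bij_betw[OF bij, of "\<lambda>y. chi n y x"] by simp
  also have "\<dots> = - (\<Sum>y\<in>vecs n. chi n y x)" by (simp add: neg sum_negf)
  finally show ?thesis using False by simp
qed




lemma count_orth:
  assumes fin: "finite I"
  shows "real (card {y \<in> vecs n. \<forall>a\<in>I. \<not> ip n y (v a)}) * 2 ^ card I
         = 2 ^ n * real (card {A. A \<subseteq> I \<and> (\<forall>j<n. \<not> xs v A j)})"
proof -
  have ind: "(if \<forall>a\<in>I. \<not> ip n y (v a) then 1 else 0) = (\<Prod>a\<in>I. (chi n y (v a) + 1) / 2)" for y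
  proof (cases "\<forall>a\<in>I. \<not> ip n y (v a)")
    case True
    then have "(\<Prod>a\<in>I. (chi n y (v a) + 1) / 2) = (\<Prod>a\<in>I. 1)"
      by (intro prod.cong) (auto simp: chi_def)
    then show ?thesis using True by simp
  next
    case False
    then obtain a where "a \<in> I" "ip n y (v a)" by auto
    then have "(chi n y (v a) + 1) / 2 = 0" by (simp add: chi_def)
    then have "(\<Prod>a\<in>I. (chi n y (v a) + 1) / 2) = 0"
      using \<open>a \<in> I\<close> fin by (meson prod_zero_iff)
    then show ?thesis using False by simp
  qed
  have "real (card {y \<in> vecs n. \<forall>a\<in>I. \<not> ip n y (v a)})
        = (\<Sum>y\<in>vecs n. (if \<forall>a\<in>I. \<not> ip n y (v a) then 1 else 0))"
    by (simp add: sum.If_cases[OF finite_vecs] Int_def)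
  also have "\<dots> = (\<Sum>y\<in>vecs n. (\<Prod>a\<in>I. (chi n y (v a) + 1)) / 2 ^ card I)"
    by (simp add: ind prod_dividef)
  also have "\<dots> = (\<Sum>y\<in>vecs n. (\<Sum>X\<in>Pow I. chi n y (xs v X))) / 2 ^ card I"
    by (simp add: prod_add[OF fin] prod_chi finite_subset[OF _ fin] sum_divide_distrib)
  also have "\<dots> = (\<Sum>X\<in>Pow I. (\<Sum>y\<in>vecs n. chi n y (xs v X))) / 2 ^ card I"
    by (subst sum.swap) simp
  also have "\<dots> = (\<Sum>X\<in>Pow I. (if \<forall>j<n. \<not> xs v X j then 2 ^ n else 0)) / 2 ^ card I"
    by (simp add: sum_chi)
  also have "\<dots> = 2 ^ n * real (card {A. A \<subseteq> I \<and> (\<forall>j<n. \<not> xs v A j)}) / 2 ^ card I"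
  proof -
    have "{A \<in> Pow I. \<forall>j<n. \<not> xs v A j} = {A. A \<subseteq> I \<and> (\<forall>j<n. \<not> xs v A j)}" by auto
    then show ?thesis by (simp add: sum.If_cases[of "Pow I"] fin Int_def)
  qed
  finally show ?thesis by simp
qed

lemma mats_Suc: "mats (Suc m) n = (\<lambda>(M, y). M(m := y)) ` (mats m n \<times> vecs n)"
proof
  show "mats (Suc m) n \<subseteq> (\<lambda>(M, y). M(m := y)) ` (mats m n \<times> vecs n)"
  proof
    fix M assume M: "M \<in> mats (Suc m) n"
    have "M = (\<lambda>(M, y). M(m := y)) (M(m := (\<lambda>_. False)), M m)" by auto
    moreover have "(M(m := (\<lambda>_. False)), M m) \<in> mats m n \<times> vecs n"
      using M by (auto simp: mats_def vecs_def)
    ultimately show "M \<in> (\<lambda>(M, y). M(m := y)) ` (mats m n \<times> vecs n)" by blast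
  qed
qed (auto simp: mats_def vecs_def split: if_splits)

lemma inj_mats_Suc: "inj_on (\<lambda>(M, y). M(m := y)) (mats m n \<times> vecs n)"
proof (rule inj_onI, clarify)
  fix M y M' y' assume a: "M \<in> mats m n" "y \<in> vecs n" "M' \<in> mats m n" "y' \<in> vecs n"
    "M(m := y) = M'(m := y')"
  then have "y = y'" by (metis fun_upd_same)
  moreover have "M = M'"
  proof
    fix r show "M r = M' r"
    proof (cases "r = m")
      case True then show ?thesis using a by (auto simp: mats_def)
    next
      case False then show ?thesis using a(5) by (metis fun_upd_other)
    qed
  qed
  ultimately show "M = M' \<and> y = y'" by simp
qed

lemma finite_mats[simp]: "finite (mats m n)"
proof (induction m)
  case 0
  have "mats 0 n = {\<lambda>_ _. False}" by (auto simp: mats_def)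
  then show ?case by simp
next
  case (Suc m) then show ?case by (simp add: mats_Suc)
qed

lemma sum_mats:
  fixes g :: "vec \<Rightarrow> real"
  shows "(\<Sum>M\<in>mats m n. \<Prod>r<m. g (M r)) = (\<Sum>y\<in>vecs n. g y) ^ m"
proof (induction m)
  case 0
  have "mats 0 n = {\<lambda>_ _. False}" by (auto simp: mats_def)
  then show ?case by simp
next
  case (Suc m)
  have "(\<Sum>M\<in>mats (Suc m) n. \<Prod>r<Suc m. g (M r))
     = (\<Sum>p\<in>mats m n \<times> vecs n. \<Prod>r<Suc m. g (((\<lambda>(M, y). M(m := y)) p) r))"
    unfolding mats_Suc by (rule sum.reindex[OF inj_mats_Suc, unfolded comp_def])
  also have "\<dots> = (\<Sum>p\<in>mats m n \<times> vecs n. (\<Prod>r<m. g (fst p r)) * g (snd p))"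
  proof (rule sum.cong[OF refl])
    fix p :: "(nat \<Rightarrow> vec) \<times> vec"
    obtain M y where p: "p = (M, y)" by (cases p)
    have "(\<Prod>r<m. g ((M(m := y)) r)) = (\<Prod>r<m. g (M r))" by (rule prod.cong) auto
    then show "(\<Prod>r<Suc m. g (((\<lambda>(M, y). M(m := y)) p) r)) = (\<Prod>r<m. g (fst p r)) * g (snd p)"
      by (simp add: p)
  qed
  also have "\<dots> = (\<Sum>M\<in>mats m n. \<Prod>r<m. g (M r)) * (\<Sum>y\<in>vecs n. g y)"
    by (simp add: sum_product sum.cartesian_product case_prod_beta)
  finally show ?case using Suc by simp
qed

lemma card_mats: "real (card (mats m n)) = 2 ^ (n * m)"
  using sum_mats[where g="\<lambda>_. 1" and m=m and n=n] by (simp add: card_vecs power_mult)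

lemma kernel_iff: "x \<in> kernel m n M \<longleftrightarrow> x \<in> vecs n \<and> (\<forall>r<m. \<not> ip n (M r) x)"
  by (simp add: kernel_def ip_def)

lemma prob_kernel:
  assumes fin: "finite I" and V: "\<And>a. a \<in> I \<Longrightarrow> v a \<in> vecs n"
  shows "(\<Sum>M\<in>mats m n. (if \<forall>a\<in>I. v a \<in> kernel m n M then 1 else 0) :: real)
         = real (card (mats m n)) * (real (card {A. A \<subseteq> I \<and> (\<forall>j<n. \<not> xs v A j)}) / 2 ^ card I) ^ m"
proof -
  define g where "g y = (if \<forall>a\<in>I. \<not> ip n y (v a) then 1 else 0 :: real)" for y
  define q where "q = real (card {A. A \<subseteq> I \<and> (\<forall>j<n. \<not> xs v A j)}) / 2 ^ card I"
  have "(if \<forall>a\<in>I. v a \<in> kernel m n M then 1 else 0) = (\<Prod>r<m. g (M r))" for M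
  proof (cases "\<forall>a\<in>I. v a \<in> kernel m n M")
    case True
    then have "\<And>r. r < m \<Longrightarrow> g (M r) = 1" by (auto simp: g_def kernel_iff)
    then show ?thesis using True by simp
  next
    case False
    then obtain a r where "a \<in> I" "r < m" "ip n (M r) (v a)" using V by (auto simp: kernel_iff)
    then have "g (M r) = 0" by (auto simp: g_def)
    then show ?thesis using False \<open>r < m\<close>
      by (metis finite_lessThan lessThan_iff prod_zero_iff)
  qed
  then have "(\<Sum>M\<in>mats m n. (if \<forall>a\<in>I. v a \<in> kernel m n M then 1 else 0) :: real)
       = (\<Sum>y\<in>vecs n. g y) ^ m" by (simp add: sum_mats)
  also have "(\<Sum>y\<in>vecs n. g y) = real (card {y \<in> vecs n. \<forall>a\<in>I. \<not> ip n y (v a)})"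
    by (simp add: g_def sum.If_cases Int_def)
  also have "\<dots> = 2 ^ n * q"
    using count_orth[OF fin, of n v] by (simp add: field_simps q_def)
  finally show ?thesis unfolding q_def[symmetric] by (simp add: card_mats power_mult_distrib power_mult)
qed




type_synonym tup = "vec \<times> vec \<times> vec \<times> vec"

definition tf :: "tup \<Rightarrow> nat \<Rightarrow> vec" where
  "tf t k = (case t of (a, b, c, d) \<Rightarrow> if k = 0 then a else if k = 1 then b else if k = 2 then c else d)"

definition Dset :: "nat \<Rightarrow> nat \<Rightarrow> tup set" where
  "Dset n i = {(u1, u2, u3, u4). u1 \<in> layer n i \<and> u2 \<in> layer n i \<and> u3 \<in> layer n i \<and> u4 \<in> layer n i
        \<and> u1 \<noteq> u2 \<and> u1 \<noteq> u3 \<and> u1 \<noteq> u4 \<and> u2 \<noteq> u3 \<and> u2 \<noteq> u4 \<and> u3 \<noteq> u4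
        \<and> sum4_zero u1 u2 u3 u4}"

lemma finite_layer[simp]: "finite (layer n i)"
  by (rule finite_subset[of _ "vecs n"]) (auto simp: layer_def)

lemma layer_vecs: "x \<in> layer n i \<Longrightarrow> x \<in> vecs n"
  by (simp add: layer_def)

lemma finite_Dset[simp]: "finite (Dset n i)"
  by (rule finite_subset[of _ "layer n i \<times> layer n i \<times> layer n i \<times> layer n i"]) (auto simp: Dset_def)

lemma finite_Tset[simp]: "finite (Tset n i)"
  by (rule finite_subset[of _ "layer n i \<times> layer n i \<times> layer n i \<times> layer n i"]) (auto simp: Tset_def)

lemma Dset_sub_Tset: "Dset n i \<subseteq> Tset n i"
  by (auto simp: Dset_def Tset_def)

lemma tf_simps[simp]: "tf (a,b,c,d) 0 = a" "tf (a,b,c,d) 1 = b" "tf (a,b,c,d) (Suc 0) = b" "tf (a,b,c,d) 2 = c" "tf (a,b,c,d) 3 = d"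
  by (simp_all add: tf_def)

lemma tf_vecs: "t \<in> Dset n i \<Longrightarrow> k < 4 \<Longrightarrow> tf t k \<in> vecs n"
  by (auto simp: Dset_def tf_def layer_def)

lemma tf_layer: "t \<in> Dset n i \<Longrightarrow> k < 4 \<Longrightarrow> tf t k \<in> layer n i"
  by (auto simp: Dset_def tf_def)

lemma Ncount_eq: "Ncount n i (kernel m n M) = card {t \<in> Dset n i. \<forall>k\<in>{..<4}. tf t k \<in> kernel m n M}"
proof -
  have "{(u1, u2, u3, u4). u1 \<in> kernel m n M \<inter> layer n i \<and> u2 \<in> kernel m n M \<inter> layer n i
        \<and> u3 \<in> kernel m n M \<inter> layer n i \<and> u4 \<in> kernel m n M \<inter> layer n i
        \<and> u1 \<noteq> u2 \<and> u1 \<noteq> u3 \<and> u1 \<noteq> u4 \<and> u2 \<noteq> u3 \<and> u2 \<noteq> u4 \<and> u3 \<noteq> u4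
        \<and> sum4_zero u1 u2 u3 u4} = {t \<in> Dset n i. \<forall>k\<in>{..<4}. tf t k \<in> kernel m n M}"
    (is "?L = ?R")
  proof
    show "?L \<subseteq> ?R" by (auto simp: Dset_def tf_def)
    show "?R \<subseteq> ?L"
    proof (rule subsetI)
      fix t assume tR: "t \<in> ?R"
      obtain a b c d where tt: "t = (a, b, c, d)" by (cases t)
      have D: "(a, b, c, d) \<in> Dset n i" using tR tt by simp
      have q: "\<And>k. k < (4::nat) \<Longrightarrow> tf (a, b, c, d) k \<in> kernel m n M" using tR tt by auto
      have "a \<in> kernel m n M" "b \<in> kernel m n M" "c \<in> kernel m n M" "d \<in> kernel m n M"
        using q[of 0] q[of 1] q[of 2] q[of 3] by simp_all
      then show "t \<in> ?L" using D tt unfolding Dset_def by blast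
    qed
  qed
  then show ?thesis by (simp add: Ncount_def)
qed

lemma xs4:
  fixes v :: "nat \<Rightarrow> vec"
  assumes "A \<subseteq> {..<4}"
  shows "xs v A j = ((0 \<in> A \<and> v 0 j) \<noteq> ((1 \<in> A \<and> v 1 j) \<noteq> ((2 \<in> A \<and> v 2 j) \<noteq> (3 \<in> A \<and> v 3 j))))"
proof -
  define B where "B k = (if k \<in> A \<and> v k j then {k} else {})" for k :: nat
  have A4: "\<And>a. a \<in> A \<Longrightarrow> a = 0 \<or> a = 1 \<or> a = 2 \<or> a = 3"
  proof -
    fix a assume "a \<in> A" then have "a < 4" using assms by auto
    then show "a = 0 \<or> a = 1 \<or> a = 2 \<or> a = 3" by presburger
  qed
  have "{a \<in> A. v a j} = sd (B 0) (sd (B 1) (sd (B 2) (B 3)))"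
  proof (rule set_eqI)
    fix x show "x \<in> {a \<in> A. v a j} \<longleftrightarrow> x \<in> sd (B 0) (sd (B 1) (sd (B 2) (B 3)))"
    proof (cases "x \<in> A")
      case True
      then show ?thesis using A4[OF True] by (elim disjE) (auto simp: B_def sd_def)
    next
      case False
      then have "x \<notin> B k" for k by (auto simp: B_def)
      then show ?thesis using False by (simp add: sd_def)
    qed
  qed
  moreover have fB: "finite (B k)" for k by (simp add: B_def)
  moreover have cB: "odd (card (B k)) = (k \<in> A \<and> v k j)" for k by (simp add: B_def)
  moreover have fsd: "finite P \<Longrightarrow> finite Q \<Longrightarrow> finite (sd P Q)" for P Q :: "nat set" by (simp add: sd_def)
  ultimately show ?thesis unfolding xs_def
    by (simp add: odd_card_sd fsd del: One_nat_def)
qed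

lemma sum4_pt: assumes "sum4_zero u1 u2 u3 u4" shows "u4 j = (u1 j \<noteq> (u2 j \<noteq> u3 j))"
proof -
  have "(u1 j \<noteq> u2 j) = (u3 j \<noteq> u4 j)" using assms by (simp add: sum4_zero_def)
  then show ?thesis by auto
qed

lemma vecs_neq: assumes "x \<in> vecs n" "y \<in> vecs n" "x \<noteq> y" shows "\<exists>j<n. x j \<noteq> y j"
proof (rule ccontr)
  assume "\<not> (\<exists>j<n. x j \<noteq> y j)"
  then have "x j = y j" for j
  proof (cases "j < n")
    case False then show ?thesis using assms(1,2) unfolding vecs_def by (simp add: not_less)
  qed (use \<open>\<not> (\<exists>j<n. x j \<noteq> y j)\<close> in auto)
  then show False using assms(3) by auto
qed

lemma layer_nz: "x \<in> layer n i \<Longrightarrow> 0 < i \<Longrightarrow> \<exists>j<n. x j"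
proof (rule ccontr)
  assume a: "x \<in> layer n i" "0 < i" "\<not> (\<exists>j<n. x j)"
  then have "{j. j < n \<and> x j} = {}" by auto
  moreover have "card {j. j < n \<and> x j} = i" using a(1) by (simp add: layer_def)
  ultimately have "i = 0" by (metis card.empty)
  then show False using a(2) by simp
qed

lemma zero_sums_D:
  assumes t: "t \<in> Dset n i" and i: "0 < i"
  shows "{A. A \<subseteq> {..<4} \<and> (\<forall>j<n. \<not> xs (tf t) A j)} = {{}, {..<4}}"
proof -
  obtain u1 u2 u3 u4 where tt: "t = (u1, u2, u3, u4)" by (cases t)
  have L: "u1 \<in> layer n i" "u2 \<in> layer n i" "u3 \<in> layer n i" "u4 \<in> layer n i"
    and d: "u1 \<noteq> u2" "u1 \<noteq> u3" "u1 \<noteq> u4" "u2 \<noteq> u3" "u2 \<noteq> u4" "u3 \<noteq> u4"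
    and s: "sum4_zero u1 u2 u3 u4" using t tt by (auto simp: Dset_def)
  have V: "u1 \<in> vecs n" "u2 \<in> vecs n" "u3 \<in> vecs n" "u4 \<in> vecs n" using L by (auto simp: layer_def)
  have s4: "\<And>j. u4 j = (u1 j \<noteq> (u2 j \<noteq> u3 j))" using sum4_pt[OF s] .
  have nz1: "\<exists>j<n. u1 j" and nz2: "\<exists>j<n. u2 j" and nz3: "\<exists>j<n. u3 j" and nz4: "\<exists>j<n. u4 j"
    using layer_nz[OF _ i] L by auto
  have n12: "\<exists>j<n. u1 j \<noteq> u2 j" and n13: "\<exists>j<n. u1 j \<noteq> u3 j" and n14: "\<exists>j<n. u1 j \<noteq> u4 j"
    and n23: "\<exists>j<n. u2 j \<noteq> u3 j" and n24: "\<exists>j<n. u2 j \<noteq> u4 j" and n34: "\<exists>j<n. u3 j \<noteq> u4 j"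
    using vecs_neq V d by auto
  show ?thesis
  proof (rule set_eqI, rule iffI)
    fix A assume "A \<in> {A. A \<subseteq> {..<4} \<and> (\<forall>j<n. \<not> xs (tf t) A j)}"
    then have A: "A \<subseteq> {..<4}" and z: "\<forall>j<n. \<not> xs (tf t) A j" by auto
    have z': "\<forall>j<n. \<not> ((0 \<in> A \<and> u1 j) \<noteq> ((1 \<in> A \<and> u2 j) \<noteq> ((2 \<in> A \<and> u3 j) \<noteq> (3 \<in> A \<and> u4 j))))"
      using z xs4[OF A, of "tf t"] by (simp add: tt)
    have A4: "A = {a. a < 4 \<and> a \<in> A}" using A by auto
    have "(0 \<in> A \<longleftrightarrow> 1 \<in> A) \<and> (0 \<in> A \<longleftrightarrow> 2 \<in> A) \<and> (0 \<in> A \<longleftrightarrow> 3 \<in> A)"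
      using z' nz1 nz2 nz3 nz4 n12 n13 n14 n23 n24 n34 s4
      by (cases "0 \<in> A"; cases "1 \<in> A"; cases "2 \<in> A"; cases "3 \<in> A"; metis)
    then have "A = {} \<or> A = {..<4}" using A
      by (cases "0 \<in> A") (auto simp: less_Suc_eq numeral_eq_Suc; blast?)+
    then show "A \<in> {{}, {..<4}}" by auto
  next
    fix A :: "nat set" assume "A \<in> {{}, {..<4}}"
    moreover have "\<forall>j<n. \<not> xs (tf t) {..<4} j"
    proof (intro allI impI)
      fix j
      have "xs (tf t) {..<4} j = (u1 j \<noteq> (u2 j \<noteq> (u3 j \<noteq> u4 j)))"
        using xs4[of "{..<4}" "tf t" j] by (simp add: tt)
      then show "\<not> xs (tf t) {..<4} j" using s4[of j]
        by (cases "u1 j"; cases "u2 j"; cases "u3 j") auto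
    qed
    ultimately show "A \<in> {A. A \<subseteq> {..<4} \<and> (\<forall>j<n. \<not> xs (tf t) A j)}" by auto
  qed
qed




definition v8 :: "tup \<Rightarrow> tup \<Rightarrow> nat \<Rightarrow> vec" where
  "v8 t t' a = (if a < 4 then tf t a else tf t' (a - 4))"

definition Z8 :: "nat \<Rightarrow> tup \<Rightarrow> tup \<Rightarrow> nat" where
  "Z8 n t t' = card {A. A \<subseteq> {..<8} \<and> (\<forall>j<n. \<not> xs (v8 t t') A j)}"

definition ind :: "nat \<Rightarrow> nat \<Rightarrow> tup \<Rightarrow> (nat \<Rightarrow> vec) \<Rightarrow> real" where
  "ind m n t M = (if \<forall>k\<in>{..<4}. tf t k \<in> kernel m n M then 1 else 0)"

lemma card_filter_sum: "finite A \<Longrightarrow> real (card {x \<in> A. P x}) = (\<Sum>x\<in>A. if P x then 1 else 0)"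
  by (simp add: sum.If_cases Int_def)

lemma Ncount_sum: "real (Ncount n i (kernel m n M)) = (\<Sum>t\<in>Dset n i. ind m n t M)"
  unfolding Ncount_eq ind_def by (rule card_filter_sum) simp

lemma sum_ind:
  assumes t: "t \<in> Dset n i" and i: "0 < i"
  shows "(\<Sum>M\<in>mats m n. ind m n t M) = real (card (mats m n)) * (1/8) ^ m"
proof -
  have "(\<Sum>M\<in>mats m n. ind m n t M) = real (card (mats m n)) * (real (card {A. A \<subseteq> {..<4} \<and> (\<forall>j<n. \<not> xs (tf t) A j)}) / 2 ^ card {..<4::nat}) ^ m"
    unfolding ind_def by (rule prob_kernel) (auto intro: tf_vecs[OF t])
  also have "card {A. A \<subseteq> {..<4} \<and> (\<forall>j<n. \<not> xs (tf t) A j)} = 2"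
  proof -
    have "(0::nat) \<in> {..<4}" by simp
    then have "{..<4::nat} \<noteq> {}" by blast
    then show ?thesis unfolding zero_sums_D[OF t i] by simp
  qed
  finally show ?thesis by simp
qed

lemma EN_eq:
  assumes i: "0 < i"
  shows "EN m n i = real (card (Dset n i)) * (1/8) ^ m"
proof -
  have pos: "real (card (mats m n)) > 0" using card_mats[of m n] by simp
  have "(\<Sum>M\<in>mats m n. real (Ncount n i (kernel m n M))) = (\<Sum>t\<in>Dset n i. \<Sum>M\<in>mats m n. ind m n t M)"
    by (simp add: Ncount_sum sum.swap[of _ "mats m n"])
  also have "\<dots> = (\<Sum>t\<in>Dset n i. real (card (mats m n)) * (1/8) ^ m)"
    by (rule sum.cong) (auto simp: sum_ind i)
  moreover have "mats m n \<noteq> {}" using pos by auto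
  ultimately show ?thesis using pos by (simp add: EN_def)
qed

lemma ind_mult:
  assumes "t \<in> Dset n i" "t' \<in> Dset n i"
  shows "ind m n t M * ind m n t' M = (if \<forall>a\<in>{..<8}. v8 t t' a \<in> kernel m n M then 1 else 0)"
proof -
  have "(\<forall>a\<in>{..<8}. v8 t t' a \<in> kernel m n M) \<longleftrightarrow>
        (\<forall>k\<in>{..<4}. tf t k \<in> kernel m n M) \<and> (\<forall>k\<in>{..<4}. tf t' k \<in> kernel m n M)"
  proof
    assume h: "\<forall>a\<in>{..<8}. v8 t t' a \<in> kernel m n M"
    have "tf t k \<in> kernel m n M" if "k < 4" for k using bspec[OF h, of k] that by (simp add: v8_def)
    moreover have "tf t' k \<in> kernel m n M" if "k < 4" for k using bspec[OF h, of "k + 4"] that by (simp add: v8_def)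
    ultimately show "(\<forall>k\<in>{..<4}. tf t k \<in> kernel m n M) \<and> (\<forall>k\<in>{..<4}. tf t' k \<in> kernel m n M)" by auto
  next
    assume h: "(\<forall>k\<in>{..<4}. tf t k \<in> kernel m n M) \<and> (\<forall>k\<in>{..<4}. tf t' k \<in> kernel m n M)"
    show "\<forall>a\<in>{..<8}. v8 t t' a \<in> kernel m n M"
    proof
      fix a :: nat assume "a \<in> {..<8}"
      then show "v8 t t' a \<in> kernel m n M" using h by (cases "a < 4") (auto simp: v8_def)
    qed
  qed
  then show ?thesis by (simp add: ind_def)
qed

lemma v8_vecs: "t \<in> Dset n i \<Longrightarrow> t' \<in> Dset n i \<Longrightarrow> a \<in> {..<8} \<Longrightarrow> v8 t t' a \<in> vecs n"
  by (auto simp: v8_def intro!: tf_vecs)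

lemma VarN_eq:
  assumes i: "0 < i"
  shows "VarN m n i = (\<Sum>t\<in>Dset n i. \<Sum>t'\<in>Dset n i. (real (Z8 n t t') / 256) ^ m - (1/64) ^ m)"
proof -
  define c where "c = real (card (mats m n))"
  define E where "E = EN m n i"
  define N where "N M = (\<Sum>t\<in>Dset n i. ind m n t M)" for M
  have pos: "c > 0" using card_mats[of m n] by (simp add: c_def)
  have E: "E = real (card (Dset n i)) * (1/8) ^ m" using EN_eq[OF i] by (simp add: E_def)
  have sN: "(\<Sum>M\<in>mats m n. N M) = c * E"
  proof -
    have "(\<Sum>M\<in>mats m n. N M) = (\<Sum>t\<in>Dset n i. \<Sum>M\<in>mats m n. ind m n t M)"
      unfolding N_def by (rule sum.swap)
    also have "\<dots> = (\<Sum>t\<in>Dset n i. c * (1/8) ^ m)"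
      by (rule sum.cong) (auto simp: sum_ind i c_def)
    finally show ?thesis by (simp add: E)
  qed
  have sN2: "(\<Sum>M\<in>mats m n. N M ^ 2) = c * (\<Sum>t\<in>Dset n i. \<Sum>t'\<in>Dset n i. (real (Z8 n t t') / 256) ^ m)"
  proof -
    have "(\<Sum>M\<in>mats m n. N M ^ 2) = (\<Sum>M\<in>mats m n. \<Sum>t\<in>Dset n i. \<Sum>t'\<in>Dset n i. ind m n t M * ind m n t' M)"
      by (simp add: N_def power2_eq_square sum_product)
    also have "\<dots> = (\<Sum>t\<in>Dset n i. \<Sum>t'\<in>Dset n i. \<Sum>M\<in>mats m n. ind m n t M * ind m n t' M)"
      by (simp add: sum.swap[of _ "mats m n"])
    also have "\<dots> = (\<Sum>t\<in>Dset n i. \<Sum>t'\<in>Dset n i. c * (real (Z8 n t t') / 256) ^ m)"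
    proof (intro sum.cong refl)
      fix t t' assume tt: "t \<in> Dset n i" "t' \<in> Dset n i"
      have "(\<Sum>M\<in>mats m n. ind m n t M * ind m n t' M)
          = (\<Sum>M\<in>mats m n. (if \<forall>a\<in>{..<8}. v8 t t' a \<in> kernel m n M then 1 else 0))"
        by (simp add: ind_mult[OF tt])
      also have "\<dots> = c * (real (Z8 n t t') / 2 ^ card {..<8::nat}) ^ m"
        unfolding c_def Z8_def by (rule prob_kernel) (auto intro: v8_vecs[OF tt])
      finally show "(\<Sum>M\<in>mats m n. ind m n t M * ind m n t' M) = c * (real (Z8 n t t') / 256) ^ m"
        by simp
    qed
    finally show ?thesis by (simp add: sum_distrib_left)
  qed
  have E2: "E ^ 2 = (\<Sum>t\<in>Dset n i. \<Sum>t'\<in>Dset n i. (1/64 :: real) ^ m)"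
    by (simp add: E power2_eq_square power_mult_distrib[symmetric])
  have "(\<Sum>M\<in>mats m n. (real (Ncount n i (kernel m n M)) - E)^2)
      = (\<Sum>M\<in>mats m n. N M ^ 2 - 2 * E * N M + E ^ 2)"
    by (intro sum.cong refl) (simp add: Ncount_sum N_def power2_diff algebra_simps)
  also have "\<dots> = (\<Sum>M\<in>mats m n. N M ^ 2) - 2 * E * (\<Sum>M\<in>mats m n. N M) + c * E ^ 2"
    by (simp add: sum.distrib sum_subtractf sum_distrib_left c_def)
  also have "\<dots> = c * ((\<Sum>t\<in>Dset n i. \<Sum>t'\<in>Dset n i. (real (Z8 n t t') / 256) ^ m) - E ^ 2)"
    unfolding sN sN2 by (simp add: algebra_simps power2_eq_square)
  finally show ?thesis
    using pos unfolding VarN_def E_def[symmetric] c_def[symmetric]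
    by (simp add: E2 sum_subtractf)
qed




definition St :: "tup \<Rightarrow> vec set" where "St t = xs (tf t) ` Pow {..<4}"
definition W :: "tup \<Rightarrow> tup \<Rightarrow> nat set set" where
  "W t t' = {B \<in> Pow {..<4}. xs (tf t') B \<in> St t}"

lemma sd_sub: "A \<subseteq> X \<Longrightarrow> B \<subseteq> X \<Longrightarrow> sd A B \<subseteq> X" by (auto simp: sd_def)
lemma finite_sd: "finite A \<Longrightarrow> finite B \<Longrightarrow> finite (sd A B)" by (simp add: sd_def)
lemma vx_self: "vx x x = (\<lambda>_. False)" by (simp add: vx_def)
lemma vx_assoc: "vx (vx x y) z = vx x (vx y z)" by (auto simp: vx_def fun_eq_iff)
lemma vx_comm: "vx x y = vx y x" by (auto simp: vx_def fun_eq_iff)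
lemma vx_zero: "vx x (\<lambda>_. False) = x" by (simp add: vx_def)
lemma vx_eq_zero: "vx x y = (\<lambda>_. False) \<longleftrightarrow> x = y" by (auto simp: vx_def fun_eq_iff)

lemma xs_vecs: "(\<And>a. a \<in> A \<Longrightarrow> v a \<in> vecs n) \<Longrightarrow> xs v A \<in> vecs n"
proof -
  assume h: "\<And>a. a \<in> A \<Longrightarrow> v a \<in> vecs n"
  have e: "{a \<in> A. v a j} = {}" if "j \<ge> n" for j using h that by (auto simp: vecs_def)
  show ?thesis unfolding vecs_def xs_def mem_Collect_eq by (intro allI impI) (simp add: e)
qed

lemma vecs_eqI: "x \<in> vecs n \<Longrightarrow> y \<in> vecs n \<Longrightarrow> (\<forall>j<n. x j = y j) \<Longrightarrow> x = y"
  using vecs_neq by blast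

lemma xs_image: "inj_on f A \<Longrightarrow> xs v (f ` A) = xs (\<lambda>a. v (f a)) A"
proof
  fix j assume inj: "inj_on f A"
  have "{b \<in> f ` A. v b j} = f ` {a \<in> A. v (f a) j}" by auto
  moreover have "card (f ` {a \<in> A. v (f a) j}) = card {a \<in> A. v (f a) j}"
    by (rule card_image) (rule inj_on_subset[OF inj], auto)
  ultimately show "xs v (f ` A) j = xs (\<lambda>a. v (f a)) A j" by (simp add: xs_def)
qed

lemma tfD_vecs: "t \<in> Dset n i \<Longrightarrow> A \<subseteq> {..<4} \<Longrightarrow> xs (tf t) A \<in> vecs n"
  by (rule xs_vecs) (auto intro: tf_vecs)

lemma xs_v8:
  assumes S: "S \<subseteq> {..<8}"
  shows "xs (v8 t t') S = vx (xs (tf t) (S \<inter> {..<4})) (xs (tf t') ((\<lambda>a. a - 4) ` (S - {..<4})))"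
proof -
  have fin: "finite S" using S finite_subset by blast
  have "S = sd (S \<inter> {..<4}) (S - {..<4})" by (auto simp: sd_def)
  then have "xs (v8 t t') S = vx (xs (v8 t t') (S \<inter> {..<4})) (xs (v8 t t') (S - {..<4}))"
    using xs_sd[of "S \<inter> {..<4}" "S - {..<4}" "v8 t t'"] fin by simp
  moreover have "xs (v8 t t') (S \<inter> {..<4}) = xs (tf t) (S \<inter> {..<4})"
    by (rule xs_cong) (simp add: v8_def)
  moreover have "xs (v8 t t') (S - {..<4}) = xs (tf t') ((\<lambda>a. a - 4) ` (S - {..<4}))"
  proof -
    have "inj_on (\<lambda>a. a - 4) (S - {..<4::nat})" by (rule inj_onI) auto
    then have "xs (tf t') ((\<lambda>a. a - 4) ` (S - {..<4})) = xs (\<lambda>a. tf t' (a - 4)) (S - {..<4})"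
      by (rule xs_image)
    also have "\<dots> = xs (v8 t t') (S - {..<4})" by (rule xs_cong) (simp add: v8_def)
    finally show ?thesis by simp
  qed
  ultimately show ?thesis by simp
qed

lemma card_Aset_le2:
  assumes t: "t \<in> Dset n i" and i: "0 < i"
  shows "card {A. A \<subseteq> {..<4} \<and> xs (tf t) A = w} \<le> 2"
proof (cases "{A. A \<subseteq> {..<4} \<and> xs (tf t) A = w} = {}")
  case False
  then obtain A0 where A0: "A0 \<subseteq> {..<4}" "xs (tf t) A0 = w" by auto
  have "{A. A \<subseteq> {..<4} \<and> xs (tf t) A = w} \<subseteq> {A0, {..<4} - A0}"
  proof
    fix A assume "A \<in> {A. A \<subseteq> {..<4} \<and> xs (tf t) A = w}"
    then have A: "A \<subseteq> {..<4}" "xs (tf t) A = w" by auto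
    have fA: "finite A" "finite A0" using A(1) A0(1) finite_subset by auto
    have "xs (tf t) (sd A A0) = (\<lambda>_. False)"
      using xs_sd[OF fA, of "tf t"] A A0 by (simp add: vx_self)
    then have "sd A A0 \<in> {A. A \<subseteq> {..<4} \<and> (\<forall>j<n. \<not> xs (tf t) A j)}"
      using sd_sub[OF A(1) A0(1)] by simp
    then have "sd A A0 = {} \<or> sd A A0 = {..<4}" unfolding zero_sums_D[OF t i] by simp
    then show "A \<in> {A0, {..<4} - A0}"
    proof
      assume "sd A A0 = {}" then have "A = A0" by (auto simp: sd_def)
      then show ?thesis by simp
    next
      assume "sd A A0 = {..<4}" then have "A = {..<4} - A0" using A(1) A0(1)
        by (auto simp: sd_def set_eq_iff)
      then show ?thesis by simp
    qed
  qed
  then have "card {A. A \<subseteq> {..<4} \<and> xs (tf t) A = w} \<le> card {A0, {..<4} - A0}"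
    by (rule card_mono[rotated]) simp
  also have "\<dots> \<le> 2" by (simp add: card_insert_if)
  finally show ?thesis .
next
  case True then show ?thesis by (simp only: card.empty)
qed

lemma Z8_le:
  assumes t: "t \<in> Dset n i" and t': "t' \<in> Dset n i" and i: "0 < i"
  shows "Z8 n t t' \<le> 2 * card (W t t')"
proof -
  define P where "P = {(A, B). A \<subseteq> {..<4} \<and> B \<subseteq> {..<4} \<and> xs (tf t) A = xs (tf t') B}"
  define \<phi> where "\<phi> S = (S \<inter> {..<4}, (\<lambda>a. a - 4) ` (S - {..<4}))" for S :: "nat set"
  let ?Z = "{A. A \<subseteq> {..<8} \<and> (\<forall>j<n. \<not> xs (v8 t t') A j)}"
  have inj: "inj_on \<phi> ?Z"
  proof (rule inj_onI)
    fix S S' assume h: "S \<in> ?Z" "S' \<in> ?Z" "\<phi> S = \<phi> S'"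
    have rec: "X - {..<4} = (\<lambda>b. b + 4) ` ((\<lambda>a. a - 4) ` (X - {..<4}))" for X :: "nat set"
      by (auto simp: image_image image_iff)
    have "S \<inter> {..<4} = S' \<inter> {..<4}" "S - {..<4} = S' - {..<4}"
      using h(3) rec[of S] rec[of S'] by (auto simp: \<phi>_def)
    then show "S = S'" by blast
  qed
  have img: "\<phi> ` ?Z \<subseteq> P"
  proof
    fix x assume "x \<in> \<phi> ` ?Z"
    then obtain S where S: "S \<subseteq> {..<8}" "\<forall>j<n. \<not> xs (v8 t t') S j" and x: "x = \<phi> S" by auto
    have B: "(\<lambda>a. a - 4) ` (S - {..<4}) \<subseteq> {..<4}" using S(1) by auto
    have "xs (tf t) (S \<inter> {..<4}) = xs (tf t') ((\<lambda>a. a - 4) ` (S - {..<4}))"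
    proof (rule vecs_eqI[of _ n])
      show "xs (tf t) (S \<inter> {..<4}) \<in> vecs n" using tfD_vecs[OF t] by auto
      show "xs (tf t') ((\<lambda>a. a - 4) ` (S - {..<4})) \<in> vecs n" using tfD_vecs[OF t' B] .
      show "\<forall>j<n. xs (tf t) (S \<inter> {..<4}) j = xs (tf t') ((\<lambda>a. a - 4) ` (S - {..<4})) j"
        using S(2) unfolding xs_v8[OF S(1)] by (auto simp: vx_def)
    qed
    then show "x \<in> P" using B by (auto simp: x \<phi>_def P_def)
  qed
  have finP: "finite P"
    by (rule finite_subset[of _ "Pow {..<4} \<times> Pow {..<4}"]) (auto simp: P_def)
  have "Z8 n t t' \<le> card P"
    unfolding Z8_def using card_inj_on_le[OF inj img finP] .
  also have "P \<subseteq> (\<Union>B\<in>W t t'. {A. A \<subseteq> {..<4} \<and> xs (tf t) A = xs (tf t') B} \<times> {B})"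
  proof (rule subsetI)
    fix x assume "x \<in> P"
    then obtain A B where x: "x = (A, B)" and h: "A \<subseteq> {..<4}" "B \<subseteq> {..<4}" "xs (tf t) A = xs (tf t') B"
      unfolding P_def by blast
    have "xs (tf t') B \<in> St t" unfolding St_def using h by (metis PowI image_eqI)
    then have "B \<in> W t t'" using h unfolding W_def by blast
    then show "x \<in> (\<Union>B\<in>W t t'. {A. A \<subseteq> {..<4} \<and> xs (tf t) A = xs (tf t') B} \<times> {B})"
      using x h by blast
  qed
  then have "card P \<le> card (\<Union>B\<in>W t t'. {A. A \<subseteq> {..<4} \<and> xs (tf t) A = xs (tf t') B} \<times> {B})"
    by (rule card_mono[rotated]) (auto simp: W_def)
  also have "\<dots> \<le> (\<Sum>B\<in>W t t'. card ({A. A \<subseteq> {..<4} \<and> xs (tf t) A = xs (tf t') B} \<times> {B}))"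
    by (rule card_UN_le) (auto simp: W_def)
  also have "\<dots> \<le> (\<Sum>B\<in>W t t'. 2)"
    by (rule sum_mono) (simp add: card_cartesian_product card_Aset_le2[OF t i])
  finally show ?thesis by simp
qed




lemma f4: "X \<subseteq> {..<4::nat} \<Longrightarrow> finite X" by (rule finite_subset) auto

lemma card_Pow4: "card (Pow {..<4::nat}) = 16" by (simp add: card_Pow)

lemma all_in_G:
  assumes G0: "{} \<in> G" and cl: "\<forall>B\<in>G. \<forall>C\<in>G. sd B C \<in> G" and sing: "\<forall>j<4. {j} \<in> G"
  shows "S \<subseteq> {..<4::nat} \<Longrightarrow> S \<in> G"
proof -
  assume S: "S \<subseteq> {..<4}"
  have "finite S" using S finite_subset by blast
  then show "S \<in> G" using S
  proof (induction S rule: finite_induct)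
    case empty then show ?case using G0 by simp
  next
    case (insert x F)
    have "insert x F = sd F {x}" using insert(2) by (auto simp: sd_def)
    moreover have "F \<subseteq> {..<4}" "x < 4" using insert.prems by auto
    then have "F \<in> G" "{x} \<in> G" using insert.IH sing by auto
    ultimately show ?case using cl by auto
  qed
qed

lemma doubling:
  fixes G :: "nat set set"
  assumes "G \<subseteq> Pow {..<4}" "{} \<in> G" "\<forall>B\<in>G. \<forall>C\<in>G. sd B C \<in> G" "8 < 2 ^ e * card G"
  shows "\<exists>E \<subseteq> {..<4}. card E \<le> e \<and> (\<forall>S \<subseteq> {..<4}. \<exists>C\<in>G. \<exists>D\<subseteq>E. S = sd C D)"
  using assms
proof (induction e arbitrary: G)
  case 0
  show ?case
  proof (cases "\<forall>j<4. {j} \<in> G")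
    case True
    then have "\<forall>S\<subseteq>{..<4}. S \<in> G" using all_in_G[OF "0.prems"(2,3)] by blast
    then show ?thesis by (intro exI[of _ "{}"]) (auto simp: sd_def)
  next
    case False
    then obtain j where j: "j < 4" "{j} \<notin> G" by auto
    define H where "H = (\<lambda>B. sd B {j}) ` G"
    have disj: "G \<inter> H = {}"
    proof (rule ccontr)
      assume "G \<inter> H \<noteq> {}"
      then obtain B where B: "B \<in> G" "sd B {j} \<in> G" unfolding H_def by auto
      then have "sd B (sd B {j}) \<in> G" using "0.prems"(3) by blast
      moreover have "sd B (sd B {j}) = {j}" by (auto simp: sd_def)
      ultimately show False using j by simp
    qed
    have injH: "inj_on (\<lambda>B. sd B {j}) G" by (rule inj_onI) (auto simp: sd_def set_eq_iff)
    have cH: "card H = card G" unfolding H_def by (rule card_image[OF injH])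
    have sub: "G \<union> H \<subseteq> Pow {..<4}" using "0.prems"(1) j by (auto simp: H_def sd_def)
    have fG: "finite G" using "0.prems"(1) finite_subset by (metis finite_Pow_iff finite_lessThan)
    have fH: "finite H" using fG by (simp add: H_def)
    have "card (G \<union> H) = 2 * card G" using card_Un_disjoint[OF fG fH disj] cH by simp
    moreover have "card (G \<union> H) \<le> 16" using card_mono[OF _ sub] card_Pow4 by simp
    ultimately show ?thesis using "0.prems"(4) by simp
  qed
next
  case (Suc e)
  show ?case
  proof (cases "\<forall>j<4. {j} \<in> G")
    case True
    then have "\<forall>S\<subseteq>{..<4}. S \<in> G" using all_in_G[OF Suc.prems(2,3)] by blast
    then show ?thesis by (intro exI[of _ "{}"]) (auto simp: sd_def)
  next
    case False
    then obtain j where j: "j < 4" "{j} \<notin> G" by auto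
    define H where "H = (\<lambda>B. sd B {j}) ` G"
    have disj: "G \<inter> H = {}"
    proof (rule ccontr)
      assume "G \<inter> H \<noteq> {}"
      then obtain B where B: "B \<in> G" "sd B {j} \<in> G" unfolding H_def by auto
      then have "sd B (sd B {j}) \<in> G" using Suc.prems(3) by blast
      moreover have "sd B (sd B {j}) = {j}" by (auto simp: sd_def)
      ultimately show False using j by simp
    qed
    have injH: "inj_on (\<lambda>B. sd B {j}) G" by (rule inj_onI) (auto simp: sd_def set_eq_iff)
    have cH: "card H = card G" unfolding H_def by (rule card_image[OF injH])
    have sub: "G \<union> H \<subseteq> Pow {..<4}" using Suc.prems(1) j by (auto simp: H_def sd_def)
    have fG: "finite G" using Suc.prems(1) finite_subset by (metis finite_Pow_iff finite_lessThan)
    have fH: "finite H" using fG by (simp add: H_def)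
    have cGH: "card (G \<union> H) = 2 * card G" using card_Un_disjoint[OF fG fH disj] cH by simp
    have e1: "sd (sd B {j}) C = sd (sd B C) {j}" for B C :: "nat set" by (auto simp: sd_def)
    have e2: "sd B (sd C {j}) = sd (sd B C) {j}" for B C :: "nat set" by (auto simp: sd_def)
    have e3: "sd (sd B {j}) (sd C {j}) = sd B C" for B C :: "nat set" by (auto simp: sd_def)
    have e4: "sd (sd B {j}) {j} = B" for B :: "nat set" by (auto simp: sd_def)
    have clG: "sd B C \<in> G" if "B \<in> G" "C \<in> G" for B C using Suc.prems(3) that by blast
    have memH: "sd B {j} \<in> H" if "B \<in> G" for B using that unfolding H_def by blast
    have cases: "B \<in> G \<or> sd B {j} \<in> G" if "B \<in> G \<union> H" for B
      using that e4 unfolding H_def by auto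
    have cl: "\<forall>B\<in>G \<union> H. \<forall>C\<in>G \<union> H. sd B C \<in> G \<union> H"
    proof (intro ballI)
      fix B C assume B: "B \<in> G \<union> H" and C: "C \<in> G \<union> H"
      show "sd B C \<in> G \<union> H"
      proof (cases "B \<in> G")
        case bG: True
        show ?thesis
        proof (cases "C \<in> G")
          case True then show ?thesis using clG bG by blast
        next
          case False then have "sd C {j} \<in> G" using cases[OF C] by blast
          then have "sd (sd B (sd C {j})) {j} \<in> H" using memH clG bG by blast
          then show ?thesis using e2[of B "sd C {j}"] e4 by simp
        qed
      next
        case bH: False
        then have b: "sd B {j} \<in> G" using cases[OF B] by blast
        show ?thesis
        proof (cases "C \<in> G")
          case True
          then have "sd (sd (sd B {j}) C) {j} \<in> H" using memH clG b by blast
          then show ?thesis using e1[of "sd B {j}" C] e4 by simp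
        next
          case False then have "sd C {j} \<in> G" using cases[OF C] by blast
          then have "sd (sd B {j}) (sd C {j}) \<in> G" using clG b by blast
          then show ?thesis using e3 by simp
        qed
      qed
    qed
    have "8 < 2 ^ e * card (G \<union> H)" using Suc.prems(4) cGH by simp
    then obtain E' where E': "E' \<subseteq> {..<4}" "card E' \<le> e"
      "\<forall>S\<subseteq>{..<4}. \<exists>C\<in>G \<union> H. \<exists>D\<subseteq>E'. S = sd C D"
      using Suc.IH[OF sub _ cl] Suc.prems(2) by blast
    show ?thesis
    proof (intro exI[of _ "insert j E'"] conjI allI impI)
      show "insert j E' \<subseteq> {..<4}" using E'(1) j by auto
      show "card (insert j E') \<le> Suc e" using E'(2) card_insert_le_m1
        by (metis E'(1) card_insert_if finite_lessThan finite_subset le_SucI Suc_le_mono)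
      fix S :: "nat set" assume "S \<subseteq> {..<4}"
      then obtain C D where C: "C \<in> G \<union> H" "D \<subseteq> E'" "S = sd C D" using E'(3) by blast
      show "\<exists>C\<in>G. \<exists>D\<subseteq>insert j E'. S = sd C D"
      proof (cases "C \<in> G")
        case True then show ?thesis using C by blast
      next
        case False
        then obtain C0 where "C0 \<in> G" "C = sd C0 {j}" using C(1) unfolding H_def by auto
        moreover have "sd (sd C0 {j}) D = sd C0 (sd {j} D)" by (auto simp: sd_def)
        moreover have "sd {j} D \<subseteq> insert j E'" using C(2) by (auto simp: sd_def)
        ultimately show ?thesis using C(3) by metis
      qed
    qed
  qed
qed

lemma W_props:
  assumes t: "t \<in> Dset n i" and t': "t' \<in> Dset n i"
  shows "W t t' \<subseteq> Pow {..<4}" "{} \<in> W t t'" "\<forall>B\<in>W t t'. \<forall>C\<in>W t t'. sd B C \<in> W t t'"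
proof -
  show "W t t' \<subseteq> Pow {..<4}" by (auto simp: W_def)
  have "xs (tf t) {} = xs (tf t') {}" by simp
  then show "{} \<in> W t t'" unfolding W_def St_def by (metis (mono_tags, lifting) Pow_bottom image_eqI mem_Collect_eq empty_subsetI)
  show "\<forall>B\<in>W t t'. \<forall>C\<in>W t t'. sd B C \<in> W t t'"
  proof (intro ballI)
    fix B C assume B: "B \<in> W t t'" and C: "C \<in> W t t'"
    then obtain A1 A2 where A: "A1 \<subseteq> {..<4}" "A2 \<subseteq> {..<4}" "xs (tf t') B = xs (tf t) A1" "xs (tf t') C = xs (tf t) A2"
      and BC: "B \<subseteq> {..<4}" "C \<subseteq> {..<4}" unfolding W_def St_def by auto
    have fin: "finite A1" "finite A2" "finite B" "finite C" using A BC f4 by auto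
    have "xs (tf t') (sd B C) = xs (tf t) (sd A1 A2)"
      using xs_sd[of B C "tf t'"] xs_sd[of A1 A2 "tf t"] fin A by simp
    moreover have "sd A1 A2 \<subseteq> {..<4}" "sd B C \<subseteq> {..<4}" using A BC by (auto simp: sd_def)
    ultimately show "sd B C \<in> W t t'" unfolding W_def St_def by auto
  qed
qed

definition Q :: "nat \<Rightarrow> nat \<Rightarrow> tup \<Rightarrow> nat set \<Rightarrow> tup set" where
  "Q n i t E = {t' \<in> Dset n i. \<forall>p<4. \<exists>s\<in>St t. \<exists>D\<subseteq>E. tf t' p = vx s (xs (tf t') D)}"

lemma in_Q:
  assumes t: "t \<in> Dset n i" and t': "t' \<in> Dset n i" and e: "8 < 2 ^ e * card (W t t')"
  shows "\<exists>E\<subseteq>{..<4}. card E \<le> e \<and> t' \<in> Q n i t E"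
proof -
  obtain E where E: "E \<subseteq> {..<4}" "card E \<le> e" "\<forall>S \<subseteq> {..<4}. \<exists>C\<in>W t t'. \<exists>D\<subseteq>E. S = sd C D"
    using doubling[OF W_props[OF t t'] e] by blast
  have "\<forall>p<4. \<exists>s\<in>St t. \<exists>D\<subseteq>E. tf t' p = vx s (xs (tf t') D)"
  proof (intro allI impI)
    fix p :: nat assume p: "p < 4"
    then obtain C D where CD: "C \<in> W t t'" "D \<subseteq> E" "{p} = sd C D" using E(3) by blast
    have fin: "finite C" "finite D" using CD(1,2) E(1) f4 by (auto simp: W_def)
    have "tf t' p = xs (tf t') {p}" by simp
    also have "\<dots> = vx (xs (tf t') C) (xs (tf t') D)" using CD(3) xs_sd[OF fin] by simp
    finally show "\<exists>s\<in>St t. \<exists>D\<subseteq>E. tf t' p = vx s (xs (tf t') D)"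
      using CD(1,2) unfolding W_def by blast
  qed
  then show ?thesis using E(1,2) t' unfolding Q_def by blast
qed

lemma card_St: "card (St t) \<le> 16"
  unfolding St_def using card_image_le[of "Pow {..<4::nat}" "xs (tf t)"] card_Pow4 by simp

lemma tup_tf: "t = (tf t 0, tf t 1, tf t 2, tf t 3)"
  by (cases t) simp

lemma card_Q:
  assumes E: "E \<subseteq> {..<4}"
  shows "card (Q n i t E) \<le> card (layer n i) ^ card E * 256 ^ 4"
proof -
  define Dom1 where "Dom1 = (\<Pi>\<^sub>E a\<in>E. layer n i)"
  define Dom2 where "Dom2 = (\<Pi>\<^sub>E p\<in>{..<4::nat}. St t \<times> Pow E)"
  define f where "f g c p = vx (fst (c p)) (xs g (snd (c p)))" for g :: "nat \<Rightarrow> vec" and c :: "nat \<Rightarrow> vec \<times> nat set" and p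
  define \<Phi> where "\<Phi> = (\<lambda>(g, c). (f g c 0, f g c 1, f g c 2, f g c 3))"
  have finE: "finite E" using E finite_subset by blast
  have finSt: "finite (St t)" by (simp add: St_def)
  have "Q n i t E \<subseteq> \<Phi> ` (Dom1 \<times> Dom2)"
  proof
    fix t' assume t': "t' \<in> Q n i t E"
    then have D: "t' \<in> Dset n i" and h: "\<forall>p<4. \<exists>s\<in>St t. \<exists>D\<subseteq>E. tf t' p = vx s (xs (tf t') D)"
      unfolding Q_def by auto
    define c where "c = (\<lambda>p\<in>{..<4::nat}. SOME x. fst x \<in> St t \<and> snd x \<subseteq> E \<and> tf t' p = vx (fst x) (xs (tf t') (snd x)))"
    define g where "g = restrict (tf t') E"
    have cp: "fst (c p) \<in> St t \<and> snd (c p) \<subseteq> E \<and> tf t' p = vx (fst (c p)) (xs (tf t') (snd (c p)))" if p4: "p < 4" for p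
    proof -
      obtain s D where "s \<in> St t" "D \<subseteq> E" "tf t' p = vx s (xs (tf t') D)" using h[rule_format, OF p4] by blast
      define P where "P x = (fst x \<in> St t \<and> snd x \<subseteq> E \<and> tf t' p = vx (fst x) (xs (tf t') (snd x)))" for x
      have "\<exists>x. P x" unfolding P_def using \<open>s \<in> St t\<close> \<open>D \<subseteq> E\<close> \<open>tf t' p = vx s (xs (tf t') D)\<close>
        by (intro exI[of _ "(s, D)"]) simp
      then have "P (SOME x. P x)" by (rule someI_ex)
      moreover have "c p = (SOME x. P x)" unfolding c_def P_def using p4 by simp
      ultimately show ?thesis unfolding P_def by simp
    qed
    have fp: "f g c p = tf t' p" if "p < 4" for p
    proof -
      have "xs g (snd (c p)) = xs (tf t') (snd (c p))"
        by (rule xs_cong) (use cp[OF that] in \<open>auto simp: g_def\<close>)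
      then show ?thesis using cp[OF that] by (simp add: f_def)
    qed
    have "g \<in> Dom1" unfolding Dom1_def g_def using E tf_layer[OF D] by auto
    moreover have "c \<in> Dom2" unfolding Dom2_def
    proof (rule PiE_I)
      fix p :: nat assume "p \<in> {..<4}"
      then show "c p \<in> St t \<times> Pow E" using cp[of p] by (simp add: mem_Times_iff)
    next
      fix p :: nat assume "p \<notin> {..<4}"
      then show "c p = undefined" by (simp add: c_def)
    qed
    moreover have "\<Phi> (g, c) = t'"
      using fp[of 0] fp[of 1] fp[of 2] fp[of 3] tup_tf[of t'] by (simp add: \<Phi>_def)
    ultimately show "t' \<in> \<Phi> ` (Dom1 \<times> Dom2)" by force
  qed
  then have "card (Q n i t E) \<le> card (\<Phi> ` (Dom1 \<times> Dom2))"
    by (rule card_mono[rotated]) (simp add: Dom1_def Dom2_def finite_PiE finE finSt)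
  also have "\<dots> \<le> card (Dom1 \<times> Dom2)" by (rule card_image_le) (simp add: Dom1_def Dom2_def finite_PiE finE finSt)
  also have "\<dots> = card (layer n i) ^ card E * card (St t \<times> Pow E) ^ 4"
    by (simp add: card_cartesian_product Dom1_def Dom2_def card_PiE finE)
  also have "card (St t \<times> Pow E) \<le> 256"
  proof -
    have "card (Pow E) \<le> 16" using card_mono[OF _ Pow_mono[OF E]] card_Pow4 by simp
    then show ?thesis using card_St[of t] by (simp add: card_cartesian_product mult_le_mono[of _ 16 _ 16, simplified])
  qed
  then have "card (layer n i) ^ card E * card (St t \<times> Pow E) ^ 4 \<le> card (layer n i) ^ card E * 256 ^ 4"
    by (intro mult_le_mono2 power_mono) auto
  finally show ?thesis .
qed




lemma pairs_count:
  assumes l: "1 \<le> card (layer n i)"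
  shows "card {p \<in> Dset n i \<times> Dset n i. 8 < 2 ^ e * card (W (fst p) (snd p))}
         \<le> card (Dset n i) * (16 * 256 ^ 4 * card (layer n i) ^ e)"
proof -
  define \<E> where "\<E> = {E. E \<subseteq> {..<4::nat} \<and> card E \<le> e}"
  have finE: "finite \<E>" by (rule finite_subset[of _ "Pow {..<4}"]) (auto simp: \<E>_def)
  have cE: "card \<E> \<le> 16" using card_mono[of "Pow {..<4::nat}" \<E>] card_Pow4 by (auto simp: \<E>_def)
  have sub: "{p \<in> Dset n i \<times> Dset n i. 8 < 2 ^ e * card (W (fst p) (snd p))}
        \<subseteq> Sigma (Dset n i) (\<lambda>t. \<Union>E\<in>\<E>. Q n i t E)"
  proof
    fix p assume "p \<in> {p \<in> Dset n i \<times> Dset n i. 8 < 2 ^ e * card (W (fst p) (snd p))}"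
    then obtain t t' where p: "p = (t, t')" "t \<in> Dset n i" "t' \<in> Dset n i" "8 < 2 ^ e * card (W t t')"
      by auto
    then obtain E where "E \<subseteq> {..<4}" "card E \<le> e" "t' \<in> Q n i t E" using in_Q by blast
    then show "p \<in> Sigma (Dset n i) (\<lambda>t. \<Union>E\<in>\<E>. Q n i t E)" using p by (auto simp: \<E>_def)
  qed
  have finQ: "finite (Q n i t E)" for t E
    by (rule finite_subset[of _ "Dset n i"]) (auto simp: Q_def)
  have "card {p \<in> Dset n i \<times> Dset n i. 8 < 2 ^ e * card (W (fst p) (snd p))}
      \<le> card (Sigma (Dset n i) (\<lambda>t. \<Union>E\<in>\<E>. Q n i t E))"
    by (rule card_mono[OF _ sub]) (auto intro: finite_SigmaI simp: finE finQ)
  also have "\<dots> = (\<Sum>t\<in>Dset n i. card (\<Union>E\<in>\<E>. Q n i t E))"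
    by (rule card_SigmaI) (auto simp: finE finQ)
  also have "\<dots> \<le> (\<Sum>t\<in>Dset n i. \<Sum>E\<in>\<E>. card (Q n i t E))"
    by (intro sum_mono card_UN_le finE)
  also have "\<dots> \<le> (\<Sum>t\<in>Dset n i. \<Sum>E\<in>\<E>. card (layer n i) ^ e * 256 ^ 4)"
  proof (intro sum_mono)
    fix t E assume "E \<in> \<E>"
    then have E: "E \<subseteq> {..<4}" "card E \<le> e" by (auto simp: \<E>_def)
    have "card (Q n i t E) \<le> card (layer n i) ^ card E * 256 ^ 4" by (rule card_Q[OF E(1)])
    also have "\<dots> \<le> card (layer n i) ^ e * 256 ^ 4"
      using power_increasing[OF E(2) l] by simp
    finally show "card (Q n i t E) \<le> card (layer n i) ^ e * 256 ^ 4" .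
  qed
  also have "\<dots> = card (Dset n i) * (card \<E> * (card (layer n i) ^ e * 256 ^ 4))" by simp
  also have "\<dots> \<le> card (Dset n i) * (16 * 256 ^ 4 * card (layer n i) ^ e)"
    using cE by (intro mult_le_mono2) (simp add: mult_le_mono1)
  finally show ?thesis .
qed

lemma card_W: "card (W t t') \<le> 16"
  using card_mono[of "Pow {..<4::nat}" "W t t'"] card_Pow4 by (auto simp: W_def)

lemma sum_if_card: "finite A \<Longrightarrow> (\<Sum>x\<in>A. if P x then (a::real) else 0) = a * real (card {x\<in>A. P x})"
  by (simp add: sum.If_cases Int_def)

lemma VarN_le:
  assumes i: "0 < i" and l: "1 \<le> card (layer n i)"
  shows "VarN m n i \<le> 16 * 256 ^ 4 * real (card (Dset n i)) *
           (real (card (layer n i)) ^ 2 * (1/32) ^ m + real (card (layer n i)) * (1/16) ^ m + (1/8) ^ m)"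
proof -
  let ?D = "Dset n i"
  let ?l = "card (layer n i)"
  define K :: real where "K = 16 * 256 ^ 4"
  define g where "g p = (if 8 < 2^2 * card (W (fst p) (snd p)) then (1/32::real) ^ m else 0)
                      + (if 8 < 2^1 * card (W (fst p) (snd p)) then (1/16) ^ m else 0)
                      + (if 8 < 2^0 * card (W (fst p) (snd p)) then (1/8) ^ m else 0)" for p
  have trm: "(real (Z8 n t t') / 256) ^ m - (1/64) ^ m \<le> g (t, t')" if tt: "t \<in> ?D" "t' \<in> ?D" for t t'
  proof -
    have Z: "Z8 n t t' \<le> 2 * card (W t t')" by (rule Z8_le[OF tt i])
    have w: "card (W t t') \<le> 16" by (rule card_W)
    have g0: "0 \<le> g (t, t')" by (simp add: g_def)
    have p: "(0::real) \<le> (1/64)^m" "(0::real) \<le> (1/32)^m" "(0::real) \<le> (1/16)^m" by simp_all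
    consider "card (W t t') \<le> 2" | "2 < card (W t t')" "card (W t t') \<le> 4"
      | "4 < card (W t t')" "card (W t t') \<le> 8" | "8 < card (W t t')" by linarith
    then show ?thesis
    proof cases
      case 1
      then have "real (Z8 n t t') / 256 \<le> 1/64" using Z by simp
      then have "(real (Z8 n t t') / 256) ^ m \<le> (1/64) ^ m" by (intro power_mono) auto
      then show ?thesis using g0 by simp
    next
      case 2
      then have "real (Z8 n t t') / 256 \<le> 1/32" using Z by simp
      then have "(real (Z8 n t t') / 256) ^ m \<le> (1/32) ^ m" by (intro power_mono) auto
      then show ?thesis using 2 by (simp add: g_def) (use p in linarith)
    next
      case 3
      then have "real (Z8 n t t') / 256 \<le> 1/16" using Z by simp
      then have "(real (Z8 n t t') / 256) ^ m \<le> (1/16) ^ m" by (intro power_mono) auto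
      then show ?thesis using 3 by (simp add: g_def) (use p in linarith)
    next
      case 4
      then have "real (Z8 n t t') / 256 \<le> 1/8" using Z w by simp
      then have "(real (Z8 n t t') / 256) ^ m \<le> (1/8) ^ m" by (intro power_mono) auto
      then show ?thesis using 4 by (simp add: g_def) (use p in linarith)
    qed
  qed
  have "VarN m n i = (\<Sum>t\<in>?D. \<Sum>t'\<in>?D. (real (Z8 n t t') / 256) ^ m - (1/64) ^ m)"
    by (rule VarN_eq[OF i])
  also have "\<dots> \<le> (\<Sum>t\<in>?D. \<Sum>t'\<in>?D. g (t, t'))"
    by (intro sum_mono trm)
  also have "\<dots> = (\<Sum>p\<in>?D \<times> ?D. g p)" by (simp add: sum.cartesian_product)
  also have "\<dots> = (1/32) ^ m * real (card {p \<in> ?D \<times> ?D. 8 < 2^2 * card (W (fst p) (snd p))})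
             + (1/16) ^ m * real (card {p \<in> ?D \<times> ?D. 8 < 2^1 * card (W (fst p) (snd p))})
             + (1/8) ^ m * real (card {p \<in> ?D \<times> ?D. 8 < 2^0 * card (W (fst p) (snd p))})"
    unfolding g_def by (simp add: sum.distrib sum_if_card del: power_one_right)
  also have "\<dots> \<le> (1/32) ^ m * (K * real (card ?D) * ?l ^ 2)
             + (1/16) ^ m * (K * real (card ?D) * ?l ^ 1) + (1/8) ^ m * (K * real (card ?D) * ?l ^ 0)"
  proof -
    have b: "real (card {p \<in> ?D \<times> ?D. 8 < 2^e * card (W (fst p) (snd p))}) \<le> K * real (card ?D) * ?l ^ e" for e
    proof -
      have "card {p \<in> ?D \<times> ?D. 8 < 2^e * card (W (fst p) (snd p))} \<le> card ?D * (16 * 256 ^ 4 * ?l ^ e)"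
        by (rule pairs_count[OF l])
      then have "real (card {p \<in> ?D \<times> ?D. 8 < 2^e * card (W (fst p) (snd p))}) \<le> real (card ?D * (16 * 256 ^ 4 * ?l ^ e))"
        by (rule of_nat_mono)
      then show ?thesis by (simp add: K_def)
    qed
    show ?thesis
      by (intro add_mono mult_left_mono b) auto
  qed
  also have "\<dots> = K * real (card ?D) * (real ?l ^ 2 * (1/32) ^ m + real ?l * (1/16) ^ m + (1/8) ^ m)"
    by (simp add: algebra_simps)
  finally show ?thesis by (simp add: K_def)
qed




lemma card_layer: "card (layer n i) = n choose i"
proof -
  have "bij_betw (\<lambda>x. {j. j < n \<and> x j}) (layer n i) {B. B \<subseteq> {..<n} \<and> card B = i}"
  proof (rule bij_betw_byWitness[where f' = "\<lambda>S j. j \<in> S"])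
    show "\<forall>a\<in>layer n i. (\<lambda>j. j \<in> {j. j < n \<and> a j}) = a"
    proof
      fix a assume "a \<in> layer n i"
      then show "(\<lambda>j. j \<in> {j. j < n \<and> a j}) = a" by (auto simp: layer_def vecs_def fun_eq_iff) (meson not_le)
    qed
    show "\<forall>a'\<in>{B. B \<subseteq> {..<n} \<and> card B = i}. {j. j < n \<and> j \<in> a'} = a'" by auto
    show "(\<lambda>x. {j. j < n \<and> x j}) ` layer n i \<subseteq> {B. B \<subseteq> {..<n} \<and> card B = i}"
      by (auto simp: layer_def)
    show "(\<lambda>S j. j \<in> S) ` {B. B \<subseteq> {..<n} \<and> card B = i} \<subseteq> layer n i"
    proof
      fix x assume "x \<in> (\<lambda>S j. j \<in> S) ` {B. B \<subseteq> {..<n} \<and> card B = i}"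
      then obtain B where B: "B \<subseteq> {..<n}" "card B = i" "x = (\<lambda>j. j \<in> B)" by auto
      then have "{j. j < n \<and> x j} = B" by auto
      then show "x \<in> layer n i" using B by (auto simp: layer_def vecs_def)
    qed
  qed
  then show ?thesis using n_subsets[of "{..<n}" i] by (simp add: bij_betw_same_card)
qed

lemma Tset_le: "card (Tset n i) \<le> card (layer n i) ^ 3"
proof -
  have "Tset n i \<subseteq> (\<lambda>(a, b, c). (a, b, c, vx (vx a b) c)) ` (layer n i \<times> layer n i \<times> layer n i)"
  proof
    fix t assume "t \<in> Tset n i"
    then obtain a b c d where t: "t = (a, b, c, d)" "a \<in> layer n i" "b \<in> layer n i" "c \<in> layer n i"
      "sum4_zero a b c d" by (auto simp: Tset_def)
    have "d = vx (vx a b) c" using sum4_pt[OF t(5)] by (auto simp: vx_def fun_eq_iff)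
    then have "t = (\<lambda>(a, b, c). (a, b, c, vx (vx a b) c)) (a, b, c)" using t by simp
    moreover have "(a, b, c) \<in> layer n i \<times> layer n i \<times> layer n i" using t by simp
    ultimately show "t \<in> (\<lambda>(a, b, c). (a, b, c, vx (vx a b) c)) ` (layer n i \<times> layer n i \<times> layer n i)"
      by blast
  qed
  then have "card (Tset n i) \<le> card ((\<lambda>(a, b, c). (a, b, c, vx (vx a b) c)) ` (layer n i \<times> layer n i \<times> layer n i))"
    by (rule card_mono[rotated]) simp
  also have "\<dots> \<le> card (layer n i \<times> layer n i \<times> layer n i)"
    by (rule card_image_le) simp
  finally have "card (Tset n i) \<le> card (layer n i \<times> layer n i \<times> layer n i)" .
  then show ?thesis by (simp add: card_cartesian_product power3_eq_cube)
qed

lemma Tset_Dset: "card (Tset n i) \<le> card (Dset n i) + 3 * card (layer n i) ^ 2"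
proof -
  let ?L = "layer n i"
  define f1 :: "vec \<times> vec \<Rightarrow> tup" where "f1 = (\<lambda>(a, b). (a, a, b, b))"
  define f2 :: "vec \<times> vec \<Rightarrow> tup" where "f2 = (\<lambda>(a, b). (a, b, a, b))"
  define f3 :: "vec \<times> vec \<Rightarrow> tup" where "f3 = (\<lambda>(a, b). (a, b, b, a))"
  have "Tset n i \<subseteq> Dset n i \<union> (f1 ` (?L \<times> ?L) \<union> f2 ` (?L \<times> ?L) \<union> f3 ` (?L \<times> ?L))"
  proof
    fix t assume "t \<in> Tset n i"
    then obtain a b c d where t: "t = (a, b, c, d)" "a \<in> ?L" "b \<in> ?L" "c \<in> ?L" "d \<in> ?L"
      "sum4_zero a b c d" by (auto simp: Tset_def)
    have s: "\<And>j. d j = (a j \<noteq> (b j \<noteq> c j))" using sum4_pt[OF t(6)] .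
    show "t \<in> Dset n i \<union> (f1 ` (?L \<times> ?L) \<union> f2 ` (?L \<times> ?L) \<union> f3 ` (?L \<times> ?L))"
    proof (cases "a \<noteq> b \<and> a \<noteq> c \<and> a \<noteq> d \<and> b \<noteq> c \<and> b \<noteq> d \<and> c \<noteq> d")
      case True then show ?thesis using t by (auto simp: Dset_def)
    next
      case False
      have i1: "a = b \<Longrightarrow> c = d" "c = d \<Longrightarrow> a = b" "a = c \<Longrightarrow> b = d" "b = d \<Longrightarrow> a = c"
        "a = d \<Longrightarrow> b = c" "b = c \<Longrightarrow> a = d" using s by (auto simp: fun_eq_iff)
      from False consider "a = b \<and> c = d" | "a = c \<and> b = d" | "a = d \<and> b = c"
        using i1 by blast
      then show ?thesis
      proof cases
        case 1 then have "t = f1 (a, c)" using t by (simp add: f1_def)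
        then show ?thesis using t by blast
      next
        case 2 then have "t = f2 (a, b)" using t by (simp add: f2_def)
        then show ?thesis using t by blast
      next
        case 3 then have "t = f3 (a, b)" using t by (simp add: f3_def)
        then show ?thesis using t by blast
      qed
    qed
  qed
  then have "card (Tset n i) \<le> card (Dset n i \<union> (f1 ` (?L \<times> ?L) \<union> f2 ` (?L \<times> ?L) \<union> f3 ` (?L \<times> ?L)))"
    by (rule card_mono[rotated]) simp
  also have "\<dots> \<le> card (Dset n i) + (card (f1 ` (?L \<times> ?L)) + card (f2 ` (?L \<times> ?L)) + card (f3 ` (?L \<times> ?L)))"
    by (meson card_Un_le add_mono le_refl order_trans)
  also have "\<dots> \<le> card (Dset n i) + 3 * card ?L ^ 2"
  proof -
    have hh: "card (f ` (?L \<times> ?L)) \<le> card ?L ^ 2" for f :: "vec \<times> vec \<Rightarrow> tup"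
      using card_image_le[of "?L \<times> ?L" f] by (simp add: card_cartesian_product power2_eq_square)
    show ?thesis using hh[of f1] hh[of f2] hh[of f3] by linarith
  qed
  finally show ?thesis .
qed




definition ind0 :: "nat set \<Rightarrow> vec" where "ind0 X = (\<lambda>j. j \<in> X)"

lemma Dset_lower:
  assumes i: "1 \<le> i" and n: "i + 1 \<le> n"
  shows "((n - 2) choose (i - 1)) * (((n - 2) choose (i - 1)) - 1) \<le> card (Dset n i)"
proof -
  define Cs where "Cs = {S. S \<subseteq> {2..<n} \<and> card S = i - 1}"
  define c where "c = (n - 2) choose (i - 1)"
  have cCs: "card Cs = c" unfolding Cs_def c_def using n_subsets[of "{2..<n}" "i - 1"] by simp
  have finCs: "finite Cs" unfolding Cs_def by (rule finite_subset[of _ "Pow {2..<n}"]) auto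
  define Pairs where "Pairs = Cs \<times> Cs - (\<lambda>S. (S, S)) ` Cs"
  have cP: "card Pairs = c * c - c"
  proof -
    have "card ((\<lambda>S. (S, S)) ` Cs) = c" using cCs by (simp add: card_image inj_on_def)
    moreover have "(\<lambda>S. (S, S)) ` Cs \<subseteq> Cs \<times> Cs" by auto
    ultimately show ?thesis unfolding Pairs_def
      by (simp add: card_Diff_subset finCs card_cartesian_product cCs)
  qed
  define \<phi> where "\<phi> = (\<lambda>(S, T). (ind0 (insert 0 S), ind0 (insert 1 S), ind0 (insert 0 T), ind0 (insert 1 T)))"
  have inj: "inj_on \<phi> Pairs"
  proof (rule inj_onI)
    fix p q assume p: "p \<in> Pairs" and q: "q \<in> Pairs" and e: "\<phi> p = \<phi> q"
    obtain S T S' T' where pq: "p = (S, T)" "q = (S', T')" by (cases p, cases q) auto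
    have sub: "S \<subseteq> {2..<n}" "T \<subseteq> {2..<n}" "S' \<subseteq> {2..<n}" "T' \<subseteq> {2..<n}"
      using p q pq by (auto simp: Pairs_def Cs_def)
    have "insert 0 S = insert 0 S'" "insert 0 T = insert 0 T'"
      using e pq by (auto simp: \<phi>_def ind0_def fun_eq_iff)
    then have "S = S'" "T = T'" using sub by (auto simp: set_eq_iff) (metis atLeastLessThan_iff not_numeral_le_zero subsetD)+
    then show "p = q" using pq by simp
  qed
  have img: "\<phi> ` Pairs \<subseteq> Dset n i"
  proof
    fix x assume "x \<in> \<phi> ` Pairs"
    then obtain S T where ST: "S \<in> Cs" "T \<in> Cs" "S \<noteq> T" and x: "x = \<phi> (S, T)"
      unfolding Pairs_def by auto
    have sub: "S \<subseteq> {2..<n}" "T \<subseteq> {2..<n}" and cS: "card S = i - 1" "card T = i - 1"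
      using ST by (auto simp: Cs_def)
    have fin: "finite S" "finite T" using sub finite_subset by auto
    have lay: "ind0 (insert a X) \<in> layer n i" if "X \<subseteq> {2..<n}" "card X = i - 1" "a < 2" for a X
    proof -
      have "a \<notin> X" using that by auto
      moreover have "finite X" using that(1) finite_subset by auto
      moreover have "{j. j < n \<and> ind0 (insert a X) j} = insert a X"
        using that n i by (auto simp: ind0_def)
      ultimately show ?thesis using that n i
        by (auto simp: layer_def vecs_def ind0_def)
    qed
    have neq: "ind0 (insert a S) \<noteq> ind0 (insert b T)" if "a < 2" "b < 2" for a b
    proof
      assume "ind0 (insert a S) = ind0 (insert b T)"
      then have "insert a S = insert b T" by (auto simp: ind0_def fun_eq_iff)
      then have "S = T" using sub that by (auto simp: set_eq_iff) (metis atLeastLessThan_iff not_le subsetD)+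
      then show False using ST(3) by simp
    qed
    have "ind0 (insert 0 S) \<noteq> ind0 (insert 1 S)" "ind0 (insert 0 T) \<noteq> ind0 (insert 1 T)"
      "ind0 (insert 1 S) \<noteq> ind0 (insert 0 T)" "ind0 (insert 0 S) \<noteq> ind0 (insert 1 T)"
      using sub by (auto simp: ind0_def fun_eq_iff)
    moreover have "sum4_zero (ind0 (insert 0 S)) (ind0 (insert 1 S)) (ind0 (insert 0 T)) (ind0 (insert 1 T))"
      using sub by (auto simp: sum4_zero_def ind0_def)
    ultimately show "x \<in> Dset n i"
      using lay[OF sub(1) cS(1)] lay[OF sub(2) cS(2)] neq[of 0 0] neq[of 1 1]
      by (auto simp: x \<phi>_def Dset_def)
  qed
  have "card (\<phi> ` Pairs) \<le> card (Dset n i)" by (rule card_mono[OF _ img]) simp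
  moreover have "card (\<phi> ` Pairs) = c * c - c" using card_image[OF inj] cP by simp
  ultimately show ?thesis by (simp add: c_def diff_mult_distrib2)
qed

lemma choose_le:
  assumes "1 \<le> i" "i < n"
  shows "n choose i \<le> n ^ 2 * ((n - 2) choose (i - 1))"
proof -
  have a: "i * (n choose i) = n * ((n - 1) choose (i - 1))"
    using times_binomial_minus1_eq[of i n] assms by simp
  have b: "(n - 1 - (i - 1)) * ((n - 1) choose (i - 1)) = (n - 1) * ((n - 1 - 1) choose (i - 1))"
    by (rule binomial_absorb_comp)
  have nn: "n - 1 - (i - 1) = n - i" "n - 1 - 1 = n - 2" using assms by auto
  have "i * (n - i) * (n choose i) = n * (n - 1) * ((n - 2) choose (i - 1))"
    using a b nn by (metis mult.assoc mult.commute)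
  moreover have "1 \<le> i * (n - i)" using assms by simp
  ultimately have "n choose i \<le> n * (n - 1) * ((n - 2) choose (i - 1))"
    by (metis mult_le_mono1 mult_1)
  also have "\<dots> \<le> n ^ 2 * ((n - 2) choose (i - 1))"
    by (intro mult_le_mono1) (simp add: power2_eq_square)
  finally show ?thesis .
qed

lemma choose_ge2:
  assumes "2 \<le> i" "i + 2 \<le> n"
  shows "2 \<le> (n - 2) choose (i - 1)"
proof -
  obtain N k where Nk: "n - 2 = Suc N" "i - 1 = Suc k" "k \<le> N" "Suc k \<le> N"
    using assms by (intro that[of "n - 3" "i - 2"]) auto
  have e: "Suc N choose Suc k = (N choose k) + (N choose Suc k)" by simp
  have "0 < N choose k" "0 < N choose Suc k" using Nk by (simp_all add: zero_less_binomial)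
  then have "2 \<le> Suc N choose Suc k" unfolding e by linarith
  then show ?thesis using Nk by simp
qed

lemma D_bounds:
  assumes "2 \<le> i" "i + 2 \<le> n"
  shows "2 \<le> card (Dset n i)" "card (layer n i) ^ 2 \<le> 2 * n ^ 4 * card (Dset n i)"
proof -
  define c where "c = (n - 2) choose (i - 1)"
  have c2: "2 \<le> c" using choose_ge2[OF assms] by (simp add: c_def)
  have D: "c * (c - 1) \<le> card (Dset n i)" using Dset_lower[of i n] assms by (simp add: c_def)
  obtain k where k: "c = Suc (Suc k)" using c2 by (metis add_2_eq_Suc le_Suc_ex)
  have "2 \<le> c * (c - 1)" using k by simp
  then show "2 \<le> card (Dset n i)" using D by simp
  have "card (layer n i) \<le> n ^ 2 * c" unfolding card_layer c_def by (rule choose_le) (use assms in auto)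
  then have "card (layer n i) ^ 2 \<le> (n ^ 2 * c) ^ 2" by (rule power_mono) simp
  also have "\<dots> = n ^ 4 * c ^ 2" by (simp add: power_mult_distrib power_mult[symmetric])
  also have "c ^ 2 \<le> 2 * (c * (c - 1))" using k by (simp add: power2_eq_square)
  then have "n ^ 4 * c ^ 2 \<le> n ^ 4 * (2 * (c * (c - 1)))" by simp
  also have "\<dots> \<le> 2 * n ^ 4 * card (Dset n i)" using D by simp
  finally show "card (layer n i) ^ 2 \<le> 2 * n ^ 4 * card (Dset n i)" .
qed




lemma binom_entropy:
  assumes "0 < i" "i < n"
  shows "log 2 (real (n choose i)) \<le> real n * h (real i / real n)"
proof -
  define g where "g = real i / real n"
  have g: "0 < g" "g < 1" using assms by (auto simp: g_def)
  have "1 = (g + (1 - g)) ^ n" by simp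
  also have "\<dots> = (\<Sum>k\<le>n. real (n choose k) * g ^ k * (1 - g) ^ (n - k))"
    by (rule binomial_ring)
  also have "\<dots> \<ge> real (n choose i) * g ^ i * (1 - g) ^ (n - i)"
    by (rule member_le_sum[of i "{..n}" "\<lambda>k. real (n choose k) * g ^ k * (1 - g) ^ (n - k)"])
       (use assms g in auto)
  finally have le1: "real (n choose i) * g ^ i * (1 - g) ^ (n - i) \<le> 1" .
  have pos: "0 < real (n choose i)" using assms by simp
  have X: "0 < real (n choose i) * g ^ i * (1 - g) ^ (n - i)" using pos g by simp
  have "log 2 (real (n choose i) * g ^ i * (1 - g) ^ (n - i)) \<le> 0"
    using log_le_zero_cancel_iff[of 2, OF _ X] le1 by simp
  moreover have "log 2 (real (n choose i) * g ^ i * (1 - g) ^ (n - i))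
      = log 2 (real (n choose i)) + log 2 (g ^ i) + log 2 ((1 - g) ^ (n - i))"
    using pos g by (simp add: log_mult)
  moreover have "log 2 (g ^ i) = real i * log 2 g" "log 2 ((1 - g) ^ (n - i)) = real (n - i) * log 2 (1 - g)"
    using g by (simp_all add: log_nat_power)
  ultimately have A: "log 2 (real (n choose i)) + real i * log 2 g + real (n - i) * log 2 (1 - g) \<le> 0"
    by simp
  have "real n * h g = - (real i * log 2 g) - real (n - i) * log 2 (1 - g)"
  proof -
    have e1: "real n * g = real i" "real n * (1 - g) = real (n - i)" using assms by (auto simp: g_def field_simps)
    have e2: "log 2 (1 / g) = - log 2 g" "log 2 (1 / (1 - g)) = - log 2 (1 - g)"
      using g by (simp_all add: log_divide)
    have "real n * h g = (real n * g) * log 2 (1 / g) + (real n * (1 - g)) * log 2 (1 / (1 - g))"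
      unfolding h_def by (simp add: algebra_simps)
    then show ?thesis unfolding e1 e2 by simp
  qed
  with A
  show ?thesis unfolding g_def[symmetric] by linarith
qed

definition cat :: "nat \<Rightarrow> vec \<Rightarrow> vec \<Rightarrow> vec" where
  "cat n1 x y = (\<lambda>j. if j < n1 then x j else y (j - n1))"

lemma cat_layer:
  assumes x: "x \<in> layer n1 i1" and y: "y \<in> layer n2 i2"
  shows "cat n1 x y \<in> layer (n1 + n2) (i1 + i2)"
proof -
  have vx: "x \<in> vecs n1" and vy: "y \<in> vecs n2" using x y by (auto simp: layer_def)
  have "cat n1 x y \<in> vecs (n1 + n2)" using vy by (auto simp: vecs_def cat_def)
  moreover have "{j. j < n1 + n2 \<and> cat n1 x y j} = {j. j < n1 \<and> x j} \<union> (\<lambda>j. j + n1) ` {j. j < n2 \<and> y j}"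
  proof (rule set_eqI)
    fix j show "j \<in> {j. j < n1 + n2 \<and> cat n1 x y j} \<longleftrightarrow> j \<in> {j. j < n1 \<and> x j} \<union> (\<lambda>j. j + n1) ` {j. j < n2 \<and> y j}"
    proof (cases "j < n1")
      case False
      then show ?thesis by (auto simp: cat_def image_iff intro!: exI[of _ "j - n1"])
    qed (auto simp: cat_def)
  qed
  moreover have "card ({j. j < n1 \<and> x j} \<union> (\<lambda>j. j + n1) ` {j. j < n2 \<and> y j}) = i1 + i2"
  proof -
    have "card ((\<lambda>j. j + n1) ` {j. j < n2 \<and> y j}) = i2"
      using y by (simp add: card_image layer_def)
    moreover have "card {j. j < n1 \<and> x j} = i1" using x by (simp add: layer_def)
    ultimately show ?thesis by (subst card_Un_disjoint) auto
  qed
  ultimately show ?thesis by (simp add: layer_def)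
qed

lemma cat_inj:
  assumes "x \<in> vecs n1" "x' \<in> vecs n1" "cat n1 x y = cat n1 x' y'"
  shows "x = x'" "y = y'"
proof -
  show "x = x'"
  proof
    fix j show "x j = x' j"
    proof (cases "j < n1")
      case True then show ?thesis using fun_cong[OF assms(3), of j] by (simp add: cat_def)
    next
      case False then show ?thesis using assms(1,2) by (simp add: vecs_def)
    qed
  qed
  show "y = y'"
  proof
    fix j show "y j = y' j" using fun_cong[OF assms(3), of "j + n1"] by (simp add: cat_def)
  qed
qed

lemma Tset_super:
  "card (Tset n1 i1) * card (Tset n2 i2) \<le> card (Tset (n1 + n2) (i1 + i2))"
proof -
  define \<Psi> where "\<Psi> = (\<lambda>((a, b, c, d), (a', b', c', d')). (cat n1 a a', cat n1 b b', cat n1 c c', cat n1 d d'))"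
  have inj: "inj_on \<Psi> (Tset n1 i1 \<times> Tset n2 i2)"
  proof (rule inj_onI)
    fix p q assume hp: "p \<in> Tset n1 i1 \<times> Tset n2 i2" and hq: "q \<in> Tset n1 i1 \<times> Tset n2 i2"
      and hpq: "\<Psi> p = \<Psi> q"
    obtain a b c d a' b' c' d' where p: "p = ((a, b, c, d), (a', b', c', d'))" by (metis prod.collapse)
    obtain e f g k e' f' g' k' where q: "q = ((e, f, g, k), (e', f', g', k'))" by (metis prod.collapse)
    have v: "a \<in> vecs n1" "b \<in> vecs n1" "c \<in> vecs n1" "d \<in> vecs n1"
      "e \<in> vecs n1" "f \<in> vecs n1" "g \<in> vecs n1" "k \<in> vecs n1"
      using hp hq p q by (auto simp: Tset_def layer_def)
    have eq: "cat n1 a a' = cat n1 e e'" "cat n1 b b' = cat n1 f f'" "cat n1 c c' = cat n1 g g'"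
      "cat n1 d d' = cat n1 k k'" using hpq p q by (auto simp: \<Psi>_def)
    show "p = q"
      using cat_inj[OF v(1) v(5) eq(1)] cat_inj[OF v(2) v(6) eq(2)] cat_inj[OF v(3) v(7) eq(3)]
        cat_inj[OF v(4) v(8) eq(4)] p q by simp
  qed
  have img: "\<Psi> ` (Tset n1 i1 \<times> Tset n2 i2) \<subseteq> Tset (n1 + n2) (i1 + i2)"
  proof
    fix x assume "x \<in> \<Psi> ` (Tset n1 i1 \<times> Tset n2 i2)"
    then obtain p where hp: "p \<in> Tset n1 i1 \<times> Tset n2 i2" and x: "x = \<Psi> p" by blast
    obtain a b c d a' b' c' d' where p: "p = ((a, b, c, d), (a', b', c', d'))" by (metis prod.collapse)
    have h: "(a, b, c, d) \<in> Tset n1 i1" "(a', b', c', d') \<in> Tset n2 i2" using hp p by auto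
    then have s: "sum4_zero (cat n1 a a') (cat n1 b b') (cat n1 c c') (cat n1 d d')"
      by (auto simp: Tset_def sum4_zero_def cat_def)
    show "x \<in> Tset (n1 + n2) (i1 + i2)"
      using h s by (auto simp: x p Tset_def \<Psi>_def intro!: cat_layer)
  qed
  have "card (Tset n1 i1 \<times> Tset n2 i2) = card (\<Psi> ` (Tset n1 i1 \<times> Tset n2 i2))"
    using card_image[OF inj] by simp
  also have "\<dots> \<le> card (Tset (n1 + n2) (i1 + i2))" by (rule card_mono[OF _ img]) simp
  finally show ?thesis by (simp add: card_cartesian_product)
qed

lemma Tset_pos: "i \<le> n \<Longrightarrow> 1 \<le> card (Tset n i)"
proof -
  assume "i \<le> n"
  then have "card (layer n i) > 0" by (simp add: card_layer)
  then obtain u where u: "u \<in> layer n i" by (metis card_gt_0_iff ex_in_conv)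
  have "(u, u, u, u) \<in> Tset n i" using u by (simp add: Tset_def sum4_zero_def)
  then have "Tset n i \<noteq> {}" by blast
  then show ?thesis by (simp add: Suc_le_eq card_gt_0_iff)
qed

lemma Tset_upper: "card (Tset n i) \<le> 2 ^ (3 * n)"
proof -
  have "card (layer n i) \<le> 2 ^ n"
    using card_mono[of "vecs n" "layer n i"] card_vecs by (auto simp: layer_def)
  then have "card (layer n i) ^ 3 \<le> (2 ^ n) ^ 3" by (rule power_mono) simp
  then show ?thesis using Tset_le[of n i] by (simp add: power_mult[symmetric] mult.commute)
qed




lemma super_mult:
  fixes f :: "nat \<Rightarrow> real"
  assumes super: "\<And>a b. f a + f b \<le> f (a + b)"
  shows "real s * f p + f t \<le> f (s * p + t)"
proof (induction s)
  case 0 then show ?case by simp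
next
  case (Suc s)
  have "real (Suc s) * f p + f t = f p + (real s * f p + f t)" by (simp add: algebra_simps)
  also have "\<dots> \<le> f p + f (s * p + t)" using Suc by simp
  also have "\<dots> \<le> f (p + (s * p + t))" by (rule super)
  finally show ?case by (simp add: add.assoc)
qed

lemma fekete:
  fixes f :: "nat \<Rightarrow> real"
  assumes super: "\<And>a b. f a + f b \<le> f (a + b)" and nonneg: "\<And>k. 0 \<le> f k"
    and bnd: "\<And>k. f k \<le> C * real k"
  shows "(\<lambda>k. f k / real k) \<longlonglongrightarrow> (SUP k\<in>{1..}. f k / real k)"
proof -
  define S where "S = (SUP k\<in>{1..}. f k / real k)"
  have bdd: "bdd_above ((\<lambda>k. f k / real k) ` {1..})"
  proof (rule bdd_aboveI2)
    fix k :: nat assume "k \<in> {1..}"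
    then show "f k / real k \<le> C" using bnd[of k] by (simp add: divide_le_eq mult.commute)
  qed
  have up: "f k / real k \<le> S" if "1 \<le> k" for k
    unfolding S_def by (rule cSUP_upper[OF _ bdd]) (use that in auto)
  have C0: "0 \<le> C" using bnd[of 1] nonneg[of 1] by simp
  show ?thesis unfolding S_def[symmetric]
  proof (rule metric_LIMSEQ_I)
    fix r :: real assume r: "0 < r"
    have "S - r / 2 < S" using r by simp
    then obtain p where p: "p \<in> {1..}" "S - r / 2 < f p / real p"
      unfolding S_def using less_cSUP_iff[OF _ bdd] by (metis empty_iff atLeast_iff order_refl)
    have p1: "1 \<le> p" using p by simp
    obtain K :: nat where K: "real K > 2 * C * real p / r" using reals_Archimedean2 by blast
    show "\<exists>no. \<forall>k\<ge>no. dist (f k / real k) S < r"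
    proof (intro exI[of _ "max (max p 1) (K + 1)"] allI impI)
      fix k assume k: "max (max p 1) (K + 1) \<le> k"
      then have k1: "1 \<le> k" "p \<le> k" "K < k" by auto
      define s where "s = k div p"
      have sp: "real s * real p \<ge> real k - real p"
      proof -
        have "k = s * p + k mod p" by (simp add: s_def)
        moreover have "k mod p < p" using p1 by simp
        ultimately have "k < s * p + p" by linarith
        then have "real k < real s * real p + real p" by (metis of_nat_add of_nat_mult of_nat_less_iff)
        then show ?thesis by linarith
      qed
      have fk: "real s * f p \<le> f k"
      proof -
        have "real s * f p + f (k mod p) \<le> f (s * p + k mod p)" by (rule super_mult[OF super])
        moreover have "s * p + k mod p = k" by (simp add: s_def)
        ultimately show ?thesis using nonneg[of "k mod p"] by simp
      qed
      have kpos: "0 < real k" using k1 by simp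
      have ppos: "0 < real p" using p1 by simp
      have "f p / real p * (real k - real p) \<le> f p / real p * (real s * real p)"
        using sp nonneg[of p] ppos by (intro mult_left_mono) auto
      also have "\<dots> = real s * f p" using ppos by simp
      finally have "f p / real p * (real k - real p) \<le> f k" using fk by linarith
      then have "f p / real p * (real k - real p) / real k \<le> f k / real k"
        using kpos by (intro divide_right_mono) auto
      moreover have "f p / real p * (real k - real p) / real k = f p / real p - f p / real k"
        using kpos ppos by (simp add: field_simps)
      ultimately have "f p / real p - f p / real k \<le> f k / real k" by simp
      moreover have "f p / real k \<le> C * real p / real k"
        using bnd[of p] kpos by (simp add: divide_right_mono)
      moreover have "C * real p / real k < r / 2"
      proof -
        have "2 * C * real p / r < real k" using K k1(3) by linarith
        then have "2 * C * real p < r * real k" using r by (simp add: divide_less_eq mult.commute)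
        then show ?thesis using kpos by (simp add: divide_less_eq)
      qed
      ultimately have "S - r < f k / real k" using p(2) by linarith
      moreover have "f k / real k \<le> S" using up k1 by simp
      ultimately show "dist (f k / real k) S < r" by (simp add: dist_real_def)
    qed
  qed
qed




lemma int_seq_nonbot:
  assumes "int_seq S \<noteq> bot"
  shows "\<exists>n>0. \<forall>a\<in>S. a * real n \<in> \<int>"
proof (rule ccontr)
  assume "\<not> ?thesis"
  then have "\<forall>n\<ge>1. n \<in> {n. \<forall>a\<in>S. a * real n \<in> \<int>} \<longrightarrow> False"
  proof (intro allI impI)
    fix n :: nat assume "1 \<le> n" "n \<in> {n. \<forall>a\<in>S. a * real n \<in> \<int>}"
    then have "0 < n" "\<forall>a\<in>S. a * real n \<in> \<int>" by auto
    then show False using \<open>\<not> (\<exists>n>0. \<forall>a\<in>S. a * real n \<in> \<int>)\<close> by blast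
  qed
  then have "\<forall>\<^sub>F n in sequentially. n \<in> {n. \<forall>a\<in>S. a * real n \<in> \<int>} \<longrightarrow> False"
    unfolding eventually_sequentially by blast
  then have "eventually (\<lambda>_. False) (int_seq S)"
    unfolding int_seq_def eventually_inf_principal .
  then show False using assms by (simp add: trivial_limit_def[symmetric] eventually_False)
qed

lemma int_seq_mono: "S \<subseteq> T \<Longrightarrow> int_seq T \<le> int_seq S"
  unfolding int_seq_def by (intro inf_mono order_refl) auto

lemma psi_conv:
  fixes \<gamma> :: real
  assumes g: "0 < \<gamma>" "\<gamma> \<le> 1/2" and n0: "0 < n0" "\<gamma> * real n0 \<in> \<int>"
  shows "((\<lambda>n. log 2 (real (card (Tset n (nat \<lfloor>\<gamma> * real n\<rfloor>)))) / real n) \<longlongrightarrow> psi4 \<gamma> + 2 * h \<gamma>) (int_seq {\<gamma>})"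
proof -
  define N where "N = {n::nat. \<gamma> * real n \<in> \<int>}"
  define q where "q = (LEAST n. 0 < n \<and> n \<in> N)"
  have qN: "0 < q" "q \<in> N" using LeastI[of "\<lambda>n. 0 < n \<and> n \<in> N" n0] n0 by (auto simp: q_def N_def)
  have qmin: "n \<in> N \<Longrightarrow> 0 < n \<Longrightarrow> q \<le> n" for n using Least_le[of "\<lambda>n. 0 < n \<and> n \<in> N"] by (auto simp: q_def)
  have NN: "n \<in> N \<longleftrightarrow> q dvd n" for n
  proof
    assume n: "n \<in> N"
    have "\<gamma> * real (n mod q) = \<gamma> * real n - real (n div q) * (\<gamma> * real q)"
    proof -
      have "real n = real (n div q * q + n mod q)" by simp
      also have "\<dots> = real (n div q) * real q + real (n mod q)" by (simp only: of_nat_add of_nat_mult)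
      finally have "real n = real (n div q) * real q + real (n mod q)" .
      then show ?thesis by (simp add: algebra_simps)
    qed
    moreover have "real (n div q) * (\<gamma> * real q) \<in> \<int>" using qN(2) by (simp add: N_def)
    moreover have "\<gamma> * real n \<in> \<int>" using n by (simp add: N_def)
    ultimately have "\<gamma> * real (n mod q) \<in> \<int>" using Ints_diff by simp
    then have "n mod q \<in> N" unfolding N_def by simp
    moreover have "n mod q < q" using qN(1) by simp
    ultimately have "n mod q = 0" using qmin by (meson leD not_gr_zero)
    then show "q dvd n" by (simp add: dvd_eq_mod_eq_0)
  next
    assume "q dvd n"
    then obtain k where "n = q * k" by blast
    then have e: "\<gamma> * real n = real k * (\<gamma> * real q)" by (simp add: algebra_simps)
    have "real k \<in> \<int>" by simp
    moreover have "\<gamma> * real q \<in> \<int>" using qN(2) unfolding N_def by simp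
    ultimately have "real k * (\<gamma> * real q) \<in> \<int>" by (rule Ints_mult)
    then show "n \<in> N" unfolding N_def mem_Collect_eq e .
  qed
  obtain p :: nat where p: "\<gamma> * real q = real p"
  proof -
    obtain z where z: "\<gamma> * real q = of_int z" using qN(2) by (auto simp: N_def elim!: Ints_cases)
    have "0 \<le> z" using z g by (metis mult_nonneg_nonneg less_imp_le of_int_0_le_iff of_nat_0_le_iff)
    then show ?thesis using that[of "nat z"] z by simp
  qed
  have "\<gamma> * real q \<le> 1 * real q" using g by (intro mult_right_mono) auto
  then have pq: "p \<le> q" using p by simp
  define T where "T n = real (card (Tset n (nat \<lfloor>\<gamma> * real n\<rfloor>)))" for n
  have Tk: "T (k * q) = real (card (Tset (k * q) (k * p)))" for k
  proof -
    have e: "\<gamma> * real (k * q) = real (k * p)" using p by (simp add: algebra_simps)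
    show ?thesis unfolding T_def e floor_of_nat nat_int ..
  qed
  define f where "f k = log 2 (T (k * q))" for k
  have T1: "1 \<le> T (k * q)" for k
    unfolding Tk using Tset_pos[of "k * p" "k * q"] pq by simp
  have super: "f a + f b \<le> f (a + b)" for a b
  proof -
    have "T (a * q) * T (b * q) \<le> T ((a + b) * q)"
      unfolding Tk using Tset_super[of "a * q" "a * p" "b * q" "b * p"]
      by (simp add: algebra_simps) (metis of_nat_le_iff of_nat_mult)
    moreover have "0 < T (a * q)" "0 < T (b * q)" using T1 by (auto intro: less_le_trans[OF zero_less_one])
    ultimately have "log 2 (T (a * q)) + log 2 (T (b * q)) = log 2 (T (a * q) * T (b * q))"
      "log 2 (T (a * q) * T (b * q)) \<le> log 2 (T ((a + b) * q))"
      by (simp add: log_mult, intro log_mono) auto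
    then show ?thesis unfolding f_def by simp
  qed
  have nonneg: "0 \<le> f k" for k unfolding f_def using T1[of k] by simp
  have bnd: "f k \<le> (3 * real q) * real k" for k
  proof -
    have "real (card (Tset (k * q) (k * p))) \<le> real (2 ^ (3 * (k * q)))"
      by (rule of_nat_mono[OF Tset_upper])
    then have "T (k * q) \<le> 2 ^ (3 * (k * q))" unfolding Tk by simp
    then have "f k \<le> log 2 (2 ^ (3 * (k * q)))" unfolding f_def using T1[of k]
      by (intro log_mono) auto
    also have "\<dots> = 3 * real q * real k" by (simp add: log_nat_power)
    finally show ?thesis .
  qed
  define S where "S = (SUP k\<in>{1..}. f k / real k)"
  have lim: "(\<lambda>k. f k / real k) \<longlonglongrightarrow> S" unfolding S_def by (rule fekete[OF super nonneg bnd])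
  have conv: "((\<lambda>n. log 2 (T n) / real n) \<longlongrightarrow> S / real q) (int_seq {\<gamma>})"
  proof (rule tendstoI)
    fix e :: real assume e: "0 < e"
    have "e * real q > 0" using e qN by simp
    then obtain K where K: "\<forall>k\<ge>K. dist (f k / real k) S < e * real q"
      using lim[unfolded lim_sequentially] by blast
    have "\<forall>\<^sub>F n in sequentially. n \<in> {n. \<forall>a\<in>{\<gamma>}. a * real n \<in> \<int>} \<longrightarrow> dist (log 2 (T n) / real n) (S / real q) < e"
      unfolding eventually_sequentially
    proof (intro exI[of _ "(K + 1) * q"] allI impI)
      fix n assume n: "(K + 1) * q \<le> n" "n \<in> {n. \<forall>a\<in>{\<gamma>}. a * real n \<in> \<int>}"
      then have "q dvd n" using NN by (auto simp: N_def)
      then obtain k where k: "n = k * q" by (metis dvd_def mult.commute)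
      have "(K + 1) * q \<le> k * q" using n(1) k by simp
      then have "K + 1 \<le> k" using mult_le_cancel2[of "K + 1" q k] qN(1) by blast
      then have kK: "K \<le> k" "0 < k" by auto
      have "dist (f k / real k) S < e * real q" using K kK by simp
      then have a: "\<bar>f k / real k - S\<bar> < e * real q" by (simp add: dist_real_def)
      have qp: "0 < real q" using qN(1) by simp
      have "\<bar>(f k / real k) / real q - S / real q\<bar> = \<bar>f k / real k - S\<bar> / real q"
      proof -
        have "(f k / real k) / real q - S / real q = (f k / real k - S) / real q" by (rule diff_divide_distrib[symmetric])
        then show ?thesis using qp by (simp only: abs_divide)
      qed
      also have "\<dots> < e" using a qp by (simp add: divide_less_eq)
      finally have "\<bar>(f k / real k) / real q - S / real q\<bar> < e" .
      moreover have "log 2 (T n) / real n = (f k / real k) / real q" using k by (simp add: f_def)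
      ultimately show "dist (log 2 (T n) / real n) (S / real q) < e"
        by (simp add: dist_real_def)
    qed
    then show "\<forall>\<^sub>F n in int_seq {\<gamma>}. dist (log 2 (T n) / real n) (S / real q) < e"
      unfolding int_seq_def eventually_inf_principal .
  qed
  have nb: "int_seq {\<gamma>} \<noteq> bot"
  proof
    assume "int_seq {\<gamma>} = bot"
    then have "eventually (\<lambda>_. False) (int_seq {\<gamma>})" by simp
    then obtain M where h: "\<forall>n\<ge>M. n \<in> {n. \<forall>a\<in>{\<gamma>}. a * real n \<in> \<int>} \<longrightarrow> False"
      unfolding int_seq_def eventually_inf_principal eventually_sequentially by blast
    have "M * q \<in> N" using NN by simp
    then have "M * q \<in> {n. \<forall>a\<in>{\<gamma>}. a * real n \<in> \<int>}" unfolding N_def by blast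
    moreover have "M \<le> M * q" using qN(1) by simp
    ultimately show False using h by blast
  qed
  have conv2: "((\<lambda>n. log 2 (T n) / real n - 2 * h \<gamma>) \<longlongrightarrow> S / real q - 2 * h \<gamma>) (int_seq {\<gamma>})"
    by (intro tendsto_intros conv)
  have "psi4 \<gamma> = S / real q - 2 * h \<gamma>"
    unfolding psi4_def T_def[symmetric] by (rule tendsto_Lim[OF nb conv2])
  then show ?thesis using conv unfolding T_def by simp
qed




lemma log_poly_lim: "((\<lambda>n::nat. log 2 (1 + 6 * real n ^ 4) / real n) \<longlongrightarrow> 0) sequentially"
  by real_asymp

lemma log_const_lim: "((\<lambda>n::nat. c / real n) \<longlongrightarrow> 0) sequentially"
  by real_asymp

lemma bound3:
  fixes V K T x1 x2 x3 Y :: real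
  assumes V: "0 \<le> V" "V \<le> K * T * (x1 + x2 + x3)" and pos: "0 < K" "0 < T" "0 < x1" "0 < x2" "0 < x3"
    and b: "log 2 (3 * K) + log 2 T + log 2 x1 \<le> Y" "log 2 (3 * K) + log 2 T + log 2 x2 \<le> Y"
           "log 2 (3 * K) + log 2 T + log 2 x3 \<le> Y"
  shows "V = 0 \<or> log 2 V \<le> Y"
proof -
  have one: "3 * K * T * x \<le> 2 powr Y" if "0 < x" "log 2 (3 * K) + log 2 T + log 2 x \<le> Y" for x
  proof -
    have p: "0 < 3 * K * T * x" using pos that by simp
    have "log 2 (3 * K * T * x) = log 2 (3 * K) + log 2 T + log 2 x"
      using pos that by (simp add: log_mult)
    then have "log 2 (3 * K * T * x) \<le> Y" using that by simp
    then have "2 powr log 2 (3 * K * T * x) \<le> 2 powr Y" by simp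
    then show ?thesis using p by simp
  qed
  have "V \<le> (3 * K * T * x1 + 3 * K * T * x2 + 3 * K * T * x3) / 3" using V(2) by (simp add: algebra_simps)
  also have "\<dots> \<le> (2 powr Y + 2 powr Y + 2 powr Y) / 3"
    using one[OF pos(3) b(1)] one[OF pos(4) b(2)] one[OF pos(5) b(3)] by simp
  finally have "V \<le> 2 powr Y" by simp
  then show ?thesis
  proof (cases "V = 0")
    case False
    then have "0 < V" using V(1) by simp
    then have "log 2 V \<le> log 2 (2 powr Y)" using \<open>V \<le> 2 powr Y\<close> by (intro log_mono) auto
    then show ?thesis by simp
  qed simp
qed




lemma VarN_nonneg: "0 \<le> VarN m n i"
  unfolding VarN_def by (intro divide_nonneg_nonneg sum_nonneg) auto

lemma pointwise:
  fixes lam \<gamma> :: real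
  assumes g: "0 < \<gamma>" "\<gamma> \<le> 1/2" and m: "real m = lam * real n" and i: "real i = \<gamma> * real n"
    and i2: "2 \<le> i" "i + 2 \<le> n"
  defines "D \<equiv> real (card (Dset n i))" and "T \<equiv> real (card (Tset n i))" and "l \<equiv> real (card (layer n i))"
  shows "0 < EN m n i"
    "log 2 (EN m n i) = log 2 D - 3 * real m"
    "log 2 T - log 2 (1 + 6 * real n ^ 4) \<le> log 2 D" "log 2 D \<le> log 2 T"
    "log 2 l \<le> real n * h \<gamma>" "log 2 T \<le> 3 * log 2 l"
    "VarN m n i \<le> 16 * 256 ^ 4 * T * (l ^ 2 / 2 ^ (5 * m) + l / 2 ^ (4 * m) + 1 / 2 ^ (3 * m))"
    "1 \<le> l" "1 \<le> T" "0 < D"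
proof -
  have i0: "0 < i" using i2 by simp
  have Db: "2 \<le> card (Dset n i)" "card (layer n i) ^ 2 \<le> 2 * n ^ 4 * card (Dset n i)"
    using D_bounds[OF i2] by auto
  have Dpos: "0 < D" using Db(1) by (simp add: D_def)
  then show "0 < D" .
  have EN: "EN m n i = D * (1/8) ^ m" unfolding D_def by (rule EN_eq[OF i0])
  then show "0 < EN m n i" using Dpos by simp
  have e8: "(1/8::real) ^ m = 1 / 2 ^ (3 * m)" by (simp add: power_mult power_one_over)
  show "log 2 (EN m n i) = log 2 D - 3 * real m"
    unfolding EN e8 using Dpos by (simp add: log_divide log_nat_power)
  have l1: "1 \<le> card (layer n i)" unfolding card_layer using i2 by (simp add: Suc_le_eq)
  then show "1 \<le> l" by (simp add: l_def)
  have T1: "1 \<le> card (Tset n i)" using Tset_pos[of i n] i2 by simp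
  then show "1 \<le> T" by (simp add: T_def)
  have DT: "card (Dset n i) \<le> card (Tset n i)" by (rule card_mono[OF _ Dset_sub_Tset]) simp
  then show "log 2 D \<le> log 2 T" using Dpos by (simp add: D_def T_def)
  have "card (Tset n i) \<le> card (Dset n i) + 3 * (2 * n ^ 4 * card (Dset n i))"
    using Tset_Dset[of n i] Db(2) by linarith
  then have "real (card (Tset n i)) \<le> real (card (Dset n i) + 3 * (2 * n ^ 4 * card (Dset n i)))"
    by (rule of_nat_mono)
  then have "T \<le> D + 3 * (2 * real n ^ 4 * D)" unfolding T_def D_def by simp
  then have "T \<le> D * (1 + 6 * real n ^ 4)" by (simp add: algebra_simps)
  then have "log 2 T \<le> log 2 (D * (1 + 6 * real n ^ 4))"
    using T1 by (intro log_mono) (auto simp: T_def)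
  also have "\<dots> = log 2 D + log 2 (1 + 6 * real n ^ 4)"
  proof -
    have "0 < 1 + 6 * real n ^ 4" by (simp add: add_pos_nonneg)
    then show ?thesis using Dpos by (simp add: log_mult)
  qed
  finally show "log 2 T - log 2 (1 + 6 * real n ^ 4) \<le> log 2 D" by simp
  have "log 2 (real (n choose i)) \<le> real n * h (real i / real n)"
    by (rule binom_entropy) (use i2 in auto)
  moreover have "real i / real n = \<gamma>" using i i2 by simp
  ultimately show "log 2 l \<le> real n * h \<gamma>" by (simp add: l_def card_layer)
  have "real (card (Tset n i)) \<le> real (card (layer n i) ^ 3)" by (rule of_nat_mono[OF Tset_le])
  then have "T \<le> l ^ 3" unfolding T_def l_def by simp
  then have "log 2 T \<le> log 2 (l ^ 3)" using T1 by (intro log_mono) (auto simp: T_def)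
  then show "log 2 T \<le> 3 * log 2 l" using l1 by (simp add: log_nat_power l_def)
  have V: "VarN m n i \<le> 16 * 256 ^ 4 * D * (l ^ 2 * (1/32) ^ m + l * (1/16) ^ m + (1/8) ^ m)"
    unfolding D_def l_def by (rule VarN_le[OF i0 l1])
  have e: "(1/32::real) ^ m = 1 / 2 ^ (5 * m)" "(1/16::real) ^ m = 1 / 2 ^ (4 * m)"
    by (simp_all add: power_mult power_one_over)
  have "D \<le> T" using DT by (simp add: D_def T_def)
  moreover have "0 \<le> l ^ 2 * (1/32) ^ m + l * (1/16) ^ m + (1/8::real) ^ m" using l1 by (simp add: l_def)
  ultimately have "16 * 256 ^ 4 * D * (l ^ 2 * (1/32) ^ m + l * (1/16) ^ m + (1/8) ^ m)
      \<le> 16 * 256 ^ 4 * T * (l ^ 2 * (1/32) ^ m + l * (1/16) ^ m + (1/8) ^ m)"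
    by (intro mult_right_mono mult_left_mono) auto
  with V show "VarN m n i \<le> 16 * 256 ^ 4 * T * (l ^ 2 / 2 ^ (5 * m) + l / 2 ^ (4 * m) + 1 / 2 ^ (3 * m))"
    unfolding e e8 by simp
qed




lemma nat_floor_int: "x \<in> \<int> \<Longrightarrow> 0 \<le> x \<Longrightarrow> real (nat \<lfloor>x\<rfloor>) = x"
  by (metis Ints_cases floor_of_int of_int_0_le_iff of_nat_nat)

theorem mainTheorem6:
  fixes lam \<gamma> :: real
  assumes "0 < lam" "lam < 1" "0 < \<gamma>" "\<gamma> \<le> 1/2"
  shows "(\<forall>\<^sub>F n in int_seq {lam, \<gamma>}.
            EN (nat \<lfloor>lam * real n\<rfloor>) n (nat \<lfloor>\<gamma> * real n\<rfloor>) > 0)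
       \<and> ((\<lambda>n. \<bar>log 2 (EN (nat \<lfloor>lam * real n\<rfloor>) n (nat \<lfloor>\<gamma> * real n\<rfloor>)) / real n
                 - (psi4 \<gamma> + 2 * h \<gamma> - 3 * lam)\<bar>) \<longlongrightarrow> 0) (int_seq {lam, \<gamma>})
       \<and> (psi4 \<gamma> > lam \<longrightarrow>
            (\<exists>c>0. \<forall>\<^sub>F n in int_seq {lam, \<gamma>}.
               VarN (nat \<lfloor>lam * real n\<rfloor>) n (nat \<lfloor>\<gamma> * real n\<rfloor>) = 0
             \<or> log 2 (VarN (nat \<lfloor>lam * real n\<rfloor>) n (nat \<lfloor>\<gamma> * real n\<rfloor>)) / real n
                 \<le> 2 * (psi4 \<gamma> + 2 * h \<gamma> - 3 * lam) - c))"
proof (cases "int_seq {lam, \<gamma>} = bot")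
  case True
  have "\<exists>c::real. 0 < c" by (rule exI[of _ 1]) simp
  then show ?thesis using True by simp
next
  case False
  note g = assms(3,4)
  define F where "F = int_seq {lam, \<gamma>}"
  have Fnb: "F \<noteq> bot" using False by (simp add: F_def)
  obtain n0 where n0: "0 < n0" "lam * real n0 \<in> \<int>" "\<gamma> * real n0 \<in> \<int>"
    using int_seq_nonbot[OF False] by auto
  define A where "A = psi4 \<gamma> + 2 * h \<gamma>"
  define M where "M n = nat \<lfloor>lam * real n\<rfloor>" for n :: nat
  define I where "I n = nat \<lfloor>\<gamma> * real n\<rfloor>" for n :: nat
  define T where "T n = real (card (Tset n (I n)))" for n
  define D where "D n = real (card (Dset n (I n)))" for n
  define l where "l n = real (card (layer n (I n)))" for n
  have FS: "F \<le> sequentially" unfolding F_def int_seq_def by simp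
  have convT: "((\<lambda>n. log 2 (T n) / real n) \<longlongrightarrow> A) F"
  proof -
    have "((\<lambda>n. log 2 (T n) / real n) \<longlongrightarrow> A) (int_seq {\<gamma>})"
      using psi_conv[OF g n0(1,3)] unfolding A_def T_def I_def .
    moreover have "F \<le> int_seq {\<gamma>}" unfolding F_def by (rule int_seq_mono) auto
    ultimately show ?thesis by (rule tendsto_mono[rotated])
  qed
  define good where "good n \<longleftrightarrow> lam * real n \<in> \<int> \<and> \<gamma> * real n \<in> \<int> \<and> 8 / \<gamma> \<le> real n" for n
  have evgood: "\<forall>\<^sub>F n in F. good n"
    unfolding F_def int_seq_def eventually_inf_principal eventually_sequentially good_def
  proof (intro exI[of _ "nat \<lceil>8 / \<gamma>\<rceil>"] allI impI)
    fix n assume "nat \<lceil>8 / \<gamma>\<rceil> \<le> n" "n \<in> {n. \<forall>a\<in>{lam, \<gamma>}. a * real n \<in> \<int>}"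
    then show "lam * real n \<in> \<int> \<and> \<gamma> * real n \<in> \<int> \<and> 8 / \<gamma> \<le> real n"
      by (auto simp: nat_le_iff ceiling_le_iff)
  qed
  have gf: "real (M n) = lam * real n \<and> real (I n) = \<gamma> * real n \<and> 2 \<le> I n \<and> I n + 2 \<le> n \<and> 0 < n"
    if gn: "good n" for n
  proof -
    have mn: "real (M n) = lam * real n" unfolding M_def using gn assms(1)
      by (intro nat_floor_int) (auto simp: good_def)
    have in_: "real (I n) = \<gamma> * real n" unfolding I_def using gn g
      by (intro nat_floor_int) (auto simp: good_def)
    have n8: "8 \<le> \<gamma> * real n" using gn g by (auto simp: good_def divide_le_eq mult.commute)
    have "\<gamma> * real n \<le> (1/2) * real n" using g by (intro mult_right_mono) auto
    with n8 in_ have "2 \<le> real (I n)" "real (I n) + 2 \<le> real n" by auto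
    then have "2 \<le> I n" "I n + 2 \<le> n" by linarith+
    then show ?thesis using mn in_ by auto
  qed
  note pw = pointwise[OF g, of "M n" lam n "I n" for n, folded D_def T_def l_def]
  have P: "0 < EN (M n) n (I n) \<and> log 2 (EN (M n) n (I n)) = log 2 (D n) - 3 * real (M n)
     \<and> log 2 (T n) - log 2 (1 + 6 * real n ^ 4) \<le> log 2 (D n) \<and> log 2 (D n) \<le> log 2 (T n)
     \<and> log 2 (l n) \<le> real n * h \<gamma> \<and> log 2 (T n) \<le> 3 * log 2 (l n)
     \<and> VarN (M n) n (I n) \<le> 16 * 256 ^ 4 * T n * ((l n) ^ 2 / 2 ^ (5 * M n) + l n / 2 ^ (4 * M n) + 1 / 2 ^ (3 * M n))
     \<and> 1 \<le> l n \<and> 1 \<le> T n \<and> 0 < D n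
     \<and> real (M n) = lam * real n \<and> 0 < n" if gn: "good n" for n
  proof -
    have G: "real (M n) = lam * real n" "real (I n) = \<gamma> * real n" "2 \<le> I n" "I n + 2 \<le> n" "0 < n"
      using gf[OF gn] by auto
    show ?thesis using pointwise[OF g G(1-4)] G(1,5) unfolding D_def T_def l_def by auto
  qed
  have evP: "\<forall>\<^sub>F n in F. 0 < EN (M n) n (I n) \<and> log 2 (EN (M n) n (I n)) = log 2 (D n) - 3 * real (M n)
     \<and> log 2 (T n) - log 2 (1 + 6 * real n ^ 4) \<le> log 2 (D n) \<and> log 2 (D n) \<le> log 2 (T n)
     \<and> log 2 (l n) \<le> real n * h \<gamma> \<and> log 2 (T n) \<le> 3 * log 2 (l n)
     \<and> VarN (M n) n (I n) \<le> 16 * 256 ^ 4 * T n * ((l n) ^ 2 / 2 ^ (5 * M n) + l n / 2 ^ (4 * M n) + 1 / 2 ^ (3 * M n))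
     \<and> 1 \<le> l n \<and> 1 \<le> T n \<and> 0 < D n
     \<and> real (M n) = lam * real n \<and> 0 < n"
    using evgood by (rule eventually_mono) (rule P)
  have part1: "\<forall>\<^sub>F n in F. EN (M n) n (I n) > 0"
    using evP by (rule eventually_mono) blast
  have limD: "((\<lambda>n. log 2 (D n) / real n) \<longlongrightarrow> A) F"
  proof (rule tendsto_sandwich[of "\<lambda>n. log 2 (T n) / real n - log 2 (1 + 6 * real n ^ 4) / real n" _ _
        "\<lambda>n. log 2 (T n) / real n"])
    show "\<forall>\<^sub>F n in F. log 2 (T n) / real n - log 2 (1 + 6 * real n ^ 4) / real n \<le> log 2 (D n) / real n"
      using evP by (rule eventually_mono) (auto simp: diff_divide_distrib[symmetric] intro: divide_right_mono)
    show "\<forall>\<^sub>F n in F. log 2 (D n) / real n \<le> log 2 (T n) / real n"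
      using evP by (rule eventually_mono) (auto intro: divide_right_mono)
    have "((\<lambda>n. log 2 (1 + 6 * real n ^ 4) / real n) \<longlongrightarrow> 0) F"
      using log_poly_lim FS by (rule tendsto_mono[rotated])
    then show "((\<lambda>n. log 2 (T n) / real n - log 2 (1 + 6 * real n ^ 4) / real n) \<longlongrightarrow> A) F"
      using tendsto_diff[OF convT] by fastforce
    show "((\<lambda>n. log 2 (T n) / real n) \<longlongrightarrow> A) F" by (rule convT)
  qed
  have part2: "((\<lambda>n. \<bar>log 2 (EN (M n) n (I n)) / real n - (A - 3 * lam)\<bar>) \<longlongrightarrow> 0) F"
  proof -
    have "((\<lambda>n. \<bar>log 2 (D n) / real n - A\<bar>) \<longlongrightarrow> \<bar>A - A\<bar>) F"
      by (intro tendsto_intros limD)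
    then have l0: "((\<lambda>n. \<bar>log 2 (D n) / real n - A\<bar>) \<longlongrightarrow> 0) F" by simp
    have "\<forall>\<^sub>F n in F. \<bar>log 2 (D n) / real n - A\<bar> = \<bar>log 2 (EN (M n) n (I n)) / real n - (A - 3 * lam)\<bar>"
      using evP
    proof (rule eventually_mono)
      fix n assume h: "0 < EN (M n) n (I n) \<and> log 2 (EN (M n) n (I n)) = log 2 (D n) - 3 * real (M n)
     \<and> log 2 (T n) - log 2 (1 + 6 * real n ^ 4) \<le> log 2 (D n) \<and> log 2 (D n) \<le> log 2 (T n)
     \<and> log 2 (l n) \<le> real n * h \<gamma> \<and> log 2 (T n) \<le> 3 * log 2 (l n)
     \<and> VarN (M n) n (I n) \<le> 16 * 256 ^ 4 * T n * ((l n) ^ 2 / 2 ^ (5 * M n) + l n / 2 ^ (4 * M n) + 1 / 2 ^ (3 * M n))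
     \<and> 1 \<le> l n \<and> 1 \<le> T n \<and> 0 < D n
     \<and> real (M n) = lam * real n \<and> 0 < n"
      then have "log 2 (EN (M n) n (I n)) / real n = log 2 (D n) / real n - 3 * lam"
        by (simp add: diff_divide_distrib)
      then show "\<bar>log 2 (D n) / real n - A\<bar> = \<bar>log 2 (EN (M n) n (I n)) / real n - (A - 3 * lam)\<bar>"
        by simp
    qed
    then show ?thesis using l0 by (rule Lim_transform_eventually[rotated])
  qed
  have part3: "\<exists>c>0. \<forall>\<^sub>F n in F. VarN (M n) n (I n) = 0
             \<or> log 2 (VarN (M n) n (I n)) / real n \<le> 2 * (A - 3 * lam) - c" if psi: "psi4 \<gamma> > lam"
  proof -
    define \<delta> where "\<delta> = psi4 \<gamma> - lam"
    have \<delta>: "0 < \<delta>" using psi by (simp add: \<delta>_def)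
    have "A \<le> 3 * h \<gamma>"
    proof (rule tendsto_upperbound[OF convT _ Fnb])
      show "\<forall>\<^sub>F n in F. log 2 (T n) / real n \<le> 3 * h \<gamma>"
        using evP
      proof (eventually_elim)
        case (elim n)
        then have a: "log 2 (T n) \<le> 3 * log 2 (l n)" and b: "log 2 (l n) \<le> real n * h \<gamma>" and c: "0 < n"
          by auto
        have "log 2 (T n) \<le> real n * (3 * h \<gamma>)" using a b by (simp add: algebra_simps)
        then show ?case using c by (simp add: divide_le_eq mult.commute)
      qed
    qed
    then have psih: "psi4 \<gamma> \<le> h \<gamma>" by (simp add: A_def)
    define K :: real where "K = 16 * 256 ^ 4"
    have dd: "x < A + \<delta> / 4" if "dist x A < \<delta> / 4" for x
    proof -
      have "\<bar>x - A\<bar> < \<delta> / 4" using that by (simp only: dist_real_def)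
      then show ?thesis by arith
    qed
    have ev1: "\<forall>\<^sub>F n in F. log 2 (T n) / real n < A + \<delta> / 4"
      using tendstoD[OF convT, of "\<delta> / 4"] \<delta> by (auto elim!: eventually_mono intro: dd)
    have ev2: "\<forall>\<^sub>F n in F. log 2 (3 * K) / real n < \<delta> / 2"
    proof -
      have "((\<lambda>n. log 2 (3 * K) / real n) \<longlongrightarrow> 0) F"
        using log_const_lim FS by (rule tendsto_mono[rotated])
      then have "\<forall>\<^sub>F n in F. dist (log 2 (3 * K) / real n) 0 < \<delta> / 2"
        by (rule tendstoD) (use \<delta> in simp)
      then show ?thesis
      proof (rule eventually_mono)
        fix n assume "dist (log 2 (3 * K) / real n) 0 < \<delta> / 2"
        then have "\<bar>log 2 (3 * K) / real n - 0\<bar> < \<delta> / 2" by (simp only: dist_real_def)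
        then show "log 2 (3 * K) / real n < \<delta> / 2" by arith
      qed
    qed
    show ?thesis
    proof (intro exI[of _ "\<delta> / 4"] conjI)
      show "0 < \<delta> / 4" using \<delta> by simp
      show "\<forall>\<^sub>F n in F. VarN (M n) n (I n) = 0 \<or> log 2 (VarN (M n) n (I n)) / real n \<le> 2 * (A - 3 * lam) - \<delta> / 4"
        using evP ev1 ev2
      proof (eventually_elim)
        case (elim n)
        then have n0: "0 < real n" and m: "real (M n) = lam * real n" and l1: "1 \<le> l n" and T1: "1 \<le> T n"
          and lh: "log 2 (l n) \<le> real n * h \<gamma>"
          and V: "VarN (M n) n (I n) \<le> K * T n * ((l n) ^ 2 / 2 ^ (5 * M n) + l n / 2 ^ (4 * M n) + 1 / 2 ^ (3 * M n))"
          by (auto simp: K_def)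
        have e1: "log 2 (T n) < real n * A + real n * \<delta> / 4"
          using elim(2) n0 by (simp add: divide_less_eq algebra_simps)
        have e2: "log 2 (3 * K) < real n * \<delta> / 2"
          using elim(3) n0 by (simp add: divide_less_eq algebra_simps)
        have lx1: "log 2 ((l n) ^ 2 / 2 ^ (5 * M n)) = 2 * log 2 (l n) - 5 * real (M n)"
          using l1 by (simp add: log_divide log_nat_power)
        have lx2: "log 2 (l n / 2 ^ (4 * M n)) = log 2 (l n) - 4 * real (M n)"
          using l1 by (simp add: log_divide log_nat_power)
        have lx3: "log 2 (1 / 2 ^ (3 * M n)) = - 3 * real (M n)"
          by (simp add: log_divide log_nat_power)
        define Y where "Y = real n * (2 * (A - 3 * lam) - \<delta> / 4)"
        have nA: "real n * A = real n * psi4 \<gamma> + 2 * (real n * h \<gamma>)" by (simp add: A_def algebra_simps)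
        have nd: "real n * \<delta> = real n * psi4 \<gamma> - real n * lam" by (simp add: \<delta>_def algebra_simps)
        have nph: "real n * psi4 \<gamma> \<le> real n * h \<gamma>" using psih n0 by (simp add: mult_left_mono)
        have nlp: "real n * lam \<le> real n * psi4 \<gamma>" using psi n0 by (simp add: mult_left_mono less_imp_le)
        have Yeq: "Y = 2 * (real n * A) - 6 * (real n * lam) - real n * \<delta> / 4" by (simp add: Y_def algebra_simps)
        have mm: "real (M n) = real n * lam" using m by simp
        have res: "VarN (M n) n (I n) = 0 \<or> log 2 (VarN (M n) n (I n)) \<le> Y"
        proof (rule bound3[OF VarN_nonneg V])
          show "0 < K" by (simp add: K_def)
          show "0 < T n" using T1 by simp
          show "0 < l n ^ 2 / 2 ^ (5 * M n)" "0 < l n / 2 ^ (4 * M n)" "0 < 1 / (2::real) ^ (3 * M n)"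
            using l1 by auto
          show "log 2 (3 * K) + log 2 (T n) + log 2 ((l n) ^ 2 / 2 ^ (5 * M n)) \<le> Y"
            unfolding lx1 Yeq using e1 e2 lh nA nd nph nlp mm by linarith
          show "log 2 (3 * K) + log 2 (T n) + log 2 (l n / 2 ^ (4 * M n)) \<le> Y"
            unfolding lx2 Yeq using e1 e2 lh nA nd nph nlp mm by linarith
          show "log 2 (3 * K) + log 2 (T n) + log 2 (1 / 2 ^ (3 * M n)) \<le> Y"
            unfolding lx3 Yeq using e1 e2 lh nA nd nph nlp mm by linarith
        qed
        then show ?case
        proof
          assume "log 2 (VarN (M n) n (I n)) \<le> Y"
          then have "log 2 (VarN (M n) n (I n)) / real n \<le> Y / real n" using n0 by (simp add: divide_right_mono)
          also have "Y / real n = 2 * (A - 3 * lam) - \<delta> / 4" using n0 by (simp add: Y_def)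
          finally show ?thesis by simp
        qed simp
      qed
    qed
  qed
  show ?thesis
    using part1 part2 part3 unfolding F_def M_def I_def A_def by simp
qed


end
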